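(* Let $E,F$ be unital operator systems and let $\phi:E\to F$ be a ucp map which is the restriction of a $*$-homomorphism between the $C^*$-envelopes, i.e. there is a $*$-homomorphism $\widetilde\phi:C^*_{\mathrm{env}}(E)\to C^*_{\mathrm{env}}(F)$ with $\iota_F\circ\phi=\widetilde\phi\circ\iota_E$. Then the map $\phi^*:\mathcal V(E)\to\mathcal V(F)$, $[x]\mapsto[\phi^{(n)}(x)]$ for $x\in H(E,n)$, is a well-defined semigroup homomorphism, and it induces a group homomorphism $\phi^*:K_0(E)\to K_0(F)$.
   Context: For a unital operator system $(E,e)$ (matrix-ordered $*$-vector space with Archimedean matrix order unit $e$) with $C^*$-envelope embedding $\iota_E:E\to C^*_{\mathrm{env}}(E)$: a self-adjoint $x\in M_n(E)$ is a hermitian form if there is $g>0$ with $|\psi^{(n)}(x)|\ge g\cdot\mathrm{id}^{\oplus n}$ for all pure and maximal ucp maps $\psi:E\to B(\mathcal H)$; equivalently $\iota^{(n)}_E(x)$ is invertible. $H(E,n)$ is the set of hermitian forms in $M_n(E)$; $x\sim_n x'$ if joined by a norm-continuous path in $H(E,n)$. For $x\in H(E,n)$, $x'\in H(E,n')$, $x\sim x'$ if there is $k\ge n,n'$ with $x\oplus e_{k-n}\sim_k x'\oplus e_{k-n'}$, where $e_j=\mathrm{diag}(e,\dots,e)$ and $\oplus$ is the block-diagonal sum. $\mathcal V(E)$ is the set of $\sim$-classes, a semigroup under $[x]+[x']=[x\oplus x']$ with identity $[e]$; $K_0(E)$ is its Grothendieck group. $\phi^{(n)}$ denotes the entrywise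 amplification. *)

theory Defs
  imports "HOL-Analysis.Analysis" "HOL-Algebra.Group" "Jordan_Normal_Form.Matrix"
begin

text \<open>The complex structure is
given by a central element iu with iu * iu = -1 (complex scalar x + i y acts as
multiplication by x *R 1 + y *R iu).\<close>

class cstar_algebra = real_normed_algebra_1 + banach +
  fixes adj :: "'a \<Rightarrow> 'a"
    and iu :: 'a
  assumes adj_add: "adj (a + b) = adj a + adj b"
    and adj_scaleR: "adj (r *\<^sub>R a) = r *\<^sub>R adj a"
    and adj_mult: "adj (a * b) = adj b * adj a"
    and adj_adj: "adj (adj a) = a"
    and iu_square: "iu * iu = - 1"
    and iu_central: "iu * a = a * iu"
    and adj_iu: "adj iu = - iu"
    and norm_complex_scalar:
      "norm ((x *\<^sub>R 1 + y *\<^sub>R iu) * a) = sqrt (x\<^sup>2 + y\<^sup>2) * norm a"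
    and cstar_identity: "norm (adj a * a) = (norm a)\<^sup>2"

definition mat_adj :: "'a::cstar_algebra mat \<Rightarrow> 'a mat" where
  "mat_adj X = mat (dim_col X) (dim_row X) (\<lambda>(i,j). adj (X $$ (j,i)))"

definition mat_entries :: "'a mat \<Rightarrow> 'a set" where
  "mat_entries X = {X $$ (i,j) | i j. i < dim_row X \<and> j < dim_col X}"

definition mat_pos :: "'a::cstar_algebra mat \<Rightarrow> bool" where
  "mat_pos X \<longleftrightarrow> (\<exists>Y \<in> carrier_mat (dim_row X) (dim_row X).
       square_mat X \<and> X = mat_adj Y * Y)"

definition dsum :: "'a::zero mat \<Rightarrow> 'a mat \<Rightarrow> 'a mat" (infixl "\<oplus>\<^sub>d" 65) where
  "X \<oplus>\<^sub>d Y = four_block_mat X (0\<^sub>m (dim_row X) (dim_col Y)) (0\<^sub>m (dim_row Y) (dim_col X)) Y"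

definition operator_system :: "'a::cstar_algebra set \<Rightarrow> bool" where
  "operator_system S \<longleftrightarrow> 1 \<in> S \<and> 0 \<in> S
     \<and> (\<forall>a\<in>S. \<forall>b\<in>S. a + b \<in> S)
     \<and> (\<forall>a\<in>S. \<forall>r::real. r *\<^sub>R a \<in> S)
     \<and> (\<forall>a\<in>S. iu * a \<in> S)
     \<and> (\<forall>a\<in>S. adj a \<in> S)"

definition cstar_generated :: "'a::cstar_algebra set \<Rightarrow> 'a set" where
  "cstar_generated S = \<Inter>{T. S \<subseteq> T \<and> closed T \<and> 1 \<in> T
       \<and> (\<forall>a\<in>T. \<forall>b\<in>T. a + b \<in> T \<and> a * b \<in> T)
       \<and> (\<forall>a\<in>T. \<forall>r::real. r *\<^sub>R a \<in> T)
       \<and> (\<forall>a\<in>T. iu * a \<in> T \<and> adj a \<in> T)}"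

definition closed_ideal :: "'a::cstar_algebra set \<Rightarrow> bool" where
  "closed_ideal J \<longleftrightarrow> closed J \<and> 0 \<in> J
     \<and> (\<forall>a\<in>J. \<forall>b\<in>J. a + b \<in> J)
     \<and> (\<forall>a\<in>J. \<forall>r::real. r *\<^sub>R a \<in> J)
     \<and> (\<forall>a\<in>J. \<forall>x. x * a \<in> J \<and> a * x \<in> J)"

text \<open>J is a boundary ideal for S: the quotient map A \<rightarrow> A/J is a complete order
embedding on S (equivalently, being unital, completely isometric on S).  Positivity
of the image of X in M_n(A/J) = M_n(A)/M_n(J) means X - Y* Y \<in> M_n(J) for some Y.\<close>
definition boundary_ideal :: "'a::cstar_algebra set \<Rightarrow> 'a set \<Rightarrow> bool" where
  "boundary_ideal S J \<longleftrightarrow> closed_ideal J \<and>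
     (\<forall>n. \<forall>X \<in> carrier_mat n n. mat_entries X \<subseteq> S \<and> mat_adj X = X \<and>
        (\<exists>Y \<in> carrier_mat n n. mat_entries (X - mat_adj Y * Y) \<subseteq> J) \<longrightarrow> mat_pos X)"

text \<open>A (with the inclusion of S) is the C*-envelope of the operator system S:
S generates A and the Shilov boundary ideal of S in A is zero.\<close>
definition is_cstar_envelope :: "'a::cstar_algebra set \<Rightarrow> bool" where
  "is_cstar_envelope S \<longleftrightarrow> operator_system S \<and> cstar_generated S = UNIV
     \<and> (\<forall>J. boundary_ideal S J \<longrightarrow> J = {0})"

definition star_hom :: "('a::cstar_algebra \<Rightarrow> 'b::cstar_algebra) \<Rightarrow> bool" where
  "star_hom f \<longleftrightarrow> (\<forall>a b. f (a + b) = f a + f b \<and> f (a * b) = f a * f b)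
     \<and> (\<forall>r a. f (r *\<^sub>R a) = r *\<^sub>R f a) \<and> (\<forall>a. f (iu * a) = iu * f a)
     \<and> (\<forall>a. f (adj a) = adj (f a))"

definition ucp_map :: "'a::cstar_algebra set \<Rightarrow> 'b::cstar_algebra set \<Rightarrow> ('a \<Rightarrow> 'b) \<Rightarrow> bool" where
  "ucp_map S T f \<longleftrightarrow> (\<forall>a\<in>S. f a \<in> T) \<and> f 1 = 1
     \<and> (\<forall>a\<in>S. \<forall>b\<in>S. f (a + b) = f a + f b)
     \<and> (\<forall>a\<in>S. \<forall>r. f (r *\<^sub>R a) = r *\<^sub>R f a) \<and> (\<forall>a\<in>S. f (iu * a) = iu * f a)
     \<and> (\<forall>n. \<forall>X \<in> carrier_mat n n. mat_entries X \<subseteq> S \<and> mat_pos X \<longrightarrow> mat_pos (map_mat f X))"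

text \<open>Hermitian forms in M_n(E) (E = S sitting inside its C*-envelope):
self-adjoint and invertible in M_n(C*_env(E)).\<close>
definition hermitian_form :: "'a::cstar_algebra set \<Rightarrow> nat \<Rightarrow> 'a mat \<Rightarrow> bool" where
  "hermitian_form S n X \<longleftrightarrow> X \<in> carrier_mat n n \<and> mat_entries X \<subseteq> S
     \<and> mat_adj X = X \<and> invertible_mat X"

definition herm_forms :: "'a::cstar_algebra set \<Rightarrow> 'a mat set" where
  "herm_forms S = {X. \<exists>n\<ge>1. hermitian_form S n X}"

text \<open>x \<sim>_n x': joined by a continuous path in H(E,n).  The topology of M_n(E) is the
entrywise one (all operator-system matrix norms are equivalent to it).\<close>
definition herm_homotopic :: "'a::cstar_algebra set \<Rightarrow> nat \<Rightarrow> 'a mat \<Rightarrow> 'a mat \<Rightarrow> bool" where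
  "herm_homotopic S n X X' \<longleftrightarrow> (\<exists>\<gamma>::real \<Rightarrow> 'a mat.
     (\<forall>t\<in>{0..1}. hermitian_form S n (\<gamma> t))
     \<and> (\<forall>i<n. \<forall>j<n. continuous_on {0..1} (\<lambda>t. \<gamma> t $$ (i,j)))
     \<and> \<gamma> 0 = X \<and> \<gamma> 1 = X')"

definition stable_rel :: "'a::cstar_algebra set \<Rightarrow> ('a mat \<times> 'a mat) set" where
  "stable_rel S = {(X, X'). X \<in> herm_forms S \<and> X' \<in> herm_forms S \<and>
     (\<exists>k. k \<ge> dim_row X \<and> k \<ge> dim_row X' \<and>
        herm_homotopic S k (X \<oplus>\<^sub>d 1\<^sub>m (k - dim_row X)) (X' \<oplus>\<^sub>d 1\<^sub>m (k - dim_row X')))}"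

definition V_class :: "'a::cstar_algebra set \<Rightarrow> 'a mat \<Rightarrow> 'a mat set" where
  "V_class S X = stable_rel S `` {X}"

definition V_monoid :: "'a::cstar_algebra set \<Rightarrow> 'a mat set monoid" where
  "V_monoid S = \<lparr> carrier = herm_forms S // stable_rel S,
     mult = (\<lambda>c d. V_class S ((SOME X. X \<in> c) \<oplus>\<^sub>d (SOME Y. Y \<in> d))),
     one = V_class S (1\<^sub>m 1) \<rparr>"

definition groth_rel :: "('m, 'x) monoid_scheme \<Rightarrow> (('m \<times> 'm) \<times> ('m \<times> 'm)) set" where
  "groth_rel M = {((a, b), (c, d)). a \<in> carrier M \<and> b \<in> carrier M \<and> c \<in> carrier M \<and> d \<in> carrier M
     \<and> (\<exists>k \<in> carrier M. a \<otimes>\<^bsub>M\<^esub> d \<otimes>\<^bsub>M\<^esub> k = c \<otimes>\<^bsub>M\<^esub> b \<otimes>\<^bsub>M\<^esub> k)}"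

definition groth_class :: "('m, 'x) monoid_scheme \<Rightarrow> 'm \<Rightarrow> 'm \<Rightarrow> ('m \<times> 'm) set" where
  "groth_class M a b = groth_rel M `` {(a, b)}"

definition groth_group :: "('m, 'x) monoid_scheme \<Rightarrow> ('m \<times> 'm) set monoid" where
  "groth_group M = \<lparr> carrier = (carrier M \<times> carrier M) // groth_rel M,
     mult = (\<lambda>p q. let (a, b) = (SOME x. x \<in> p); (c, d) = (SOME y. y \<in> q)
                   in groth_class M (a \<otimes>\<^bsub>M\<^esub> c) (b \<otimes>\<^bsub>M\<^esub> d)),
     one = groth_class M \<one>\<^bsub>M\<^esub> \<one>\<^bsub>M\<^esub> \<rparr>"

abbreviation K0 :: "'a::cstar_algebra set \<Rightarrow> ('a mat set \<times> 'a mat set) set monoid" where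
  "K0 S \<equiv> groth_group (V_monoid S)"

end

theory Submission
  imports Defs
begin


lemma adj_zero[simp]: "adj (0::'a::cstar_algebra) = 0"
  using adj_scaleR[of 0 0] by simp

lemma adj_minus[simp]: "adj (- (a::'a::cstar_algebra)) = - adj a"
  using adj_scaleR[of "-1" a] by simp

lemma adj_diff[simp]: "adj ((a::'a::cstar_algebra) - b) = adj a - adj b"
  using adj_add[of a "- b"] by simp

lemma adj_one[simp]: "adj (1::'a::cstar_algebra) = 1"
proof -
  have "adj (adj 1 * (1::'a)) = adj 1 * adj (adj 1)" by (rule adj_mult)
  then show ?thesis by (simp add: adj_adj)
qed

lemma adj_sum: "adj (sum (f::_\<Rightarrow>'a::cstar_algebra) I) = sum (\<lambda>i. adj (f i)) I"
  by (induction I rule: infinite_finite_induct) (auto simp: adj_add)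

lemma adj_scaleR_one[simp]: "adj (r *\<^sub>R (1::'a::cstar_algebra)) = r *\<^sub>R 1"
  by (simp add: adj_scaleR)

lemma norm_le_norm_adj: "norm (a::'a::cstar_algebra) \<le> norm (adj a)"
proof (cases "a = 0")
  case True then show ?thesis by simp
next
  case False
  have "(norm a)\<^sup>2 = norm (adj a * a)" by (simp add: cstar_identity)
  also have "\<dots> \<le> norm (adj a) * norm a" by (rule norm_mult_ineq)
  finally have "norm a * norm a \<le> norm (adj a) * norm a" by (simp add: power2_eq_square)
  then show ?thesis using False by simp
qed

lemma norm_adj[simp]: "norm (adj (a::'a::cstar_algebra)) = norm a"
  using norm_le_norm_adj[of a] norm_le_norm_adj[of "adj a"] by (simp add: adj_adj)

lemma bounded_linear_adj: "bounded_linear (adj::'a::cstar_algebra\<Rightarrow>'a)"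
  by (rule bounded_linear_intro[where K=1]) (auto simp: adj_add adj_scaleR)

lemma continuous_on_adj[continuous_intros]:
  "continuous_on T (f::_\<Rightarrow>'a::cstar_algebra) \<Longrightarrow> continuous_on T (\<lambda>t. adj (f t))"
  using bounded_linear.continuous_on[OF bounded_linear_adj] by blast

lemma iu_adj_mult: "adj (iu * (t::'a::cstar_algebra)) = - (iu * adj t)"
  by (simp add: adj_mult adj_iu iu_central)

section \<open>Square roots\<close>

lemma sqrt_exists:
  fixes a :: "'a::cstar_algebra"
  assumes sa: "adj a = a" and na: "norm a < 1"
  shows "\<exists>s. adj s = s \<and> s * s = 1 - a * a \<and> s * a = a * s"
proof -
  define x where "x = a * a"
  define r where "r = (1 + norm x) / 2"
  have nx: "norm x < 1"
  proof -
    have "norm x \<le> norm a * norm a" unfolding x_def by (rule norm_mult_ineq)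
    also have "\<dots> \<le> norm a * 1" using na by (intro mult_left_mono) auto
    also have "\<dots> < 1" using na by simp
    finally show ?thesis .
  qed
  have r0: "0 \<le> r" and r1: "r < 1" using nx unfolding r_def by (auto simp: norm_ge_zero)
  have rr: "(norm x + r * r) / 2 \<le> r"
  proof -
    have "r * r \<le> r" using r0 r1 by (intro mult_left_le) auto
    moreover have "norm x \<le> r" using nx unfolding r_def by simp
    ultimately show ?thesis by simp
  qed
  define D where "D = {y::'a. \<forall>z. z * x = x * z \<longrightarrow> y * z = z * y}"
  define S where "S = {y \<in> D. adj y = y \<and> norm y \<le> r}"
  define f where "f y = (1/2::real) *\<^sub>R (x + y * y)" for y
  have xx: "x * x = x * x" by simp
  have Dx: "y \<in> D \<Longrightarrow> y * x = x * y" for y unfolding D_def by auto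
  have Dcomm: "y \<in> D \<Longrightarrow> w \<in> D \<Longrightarrow> y * w = w * y" for y w
  proof -
    assume y: "y \<in> D" and w: "w \<in> D"
    have "w * x = x * w" using Dx[OF w] .
    then show "y * w = w * y" using y unfolding D_def by blast
  qed
  have sx: "adj x = x" unfolding x_def by (simp add: adj_mult sa)
  have closedD: "closed D"
  proof -
    have "D = (\<Inter>z\<in>{z. z * x = x * z}. {y. y * z = z * y})" unfolding D_def by auto
    moreover have "closed {y. y * z = z * y}" for z :: 'a
      by (intro closed_Collect_eq continuous_intros)
    ultimately show ?thesis by auto
  qed
  have closedS: "closed S"
  proof -
    have "S = D \<inter> {y. adj y = y} \<inter> {y. norm y \<le> r}" unfolding S_def by auto
    moreover have "closed {y::'a. adj y = y}"
      by (intro closed_Collect_eq continuous_intros continuous_on_id)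
    moreover have "closed {y::'a. norm y \<le> r}"
      by (intro closed_Collect_le continuous_intros)
    ultimately show ?thesis using closedD by auto
  qed
  have "\<exists>!y\<in>S. f y = y"
  proof (rule Banach_fix[where c=r])
    show "complete S" using closedS by (simp add: complete_eq_closed)
    show "S \<noteq> {}" using r0 unfolding S_def D_def by (intro ex_in_conv[THEN iffD1] exI[of _ 0]) simp
    show "0 \<le> r" by fact
    show "r < 1" by fact
    show "f ` S \<subseteq> S"
    proof
      fix w assume "w \<in> f ` S"
      then obtain y where y: "y \<in> S" and w: "w = f y" by auto
      have "w \<in> D" unfolding D_def mem_Collect_eq
      proof (intro allI impI)
        fix z assume z: "z * x = x * z"
        have "y \<in> D" using y unfolding S_def by blast
        then have yz: "y * z = z * y" using z unfolding D_def by blast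
        have yyz: "y * y * z = z * (y * y)" by (metis mult.assoc yz)
        have "(x + y * y) * z = z * (x + y * y)"
          unfolding distrib_left distrib_right using z yyz by simp
        then show "w * z = z * w" unfolding w f_def
          by (simp add: mult_scaleR_left mult_scaleR_right)
      qed
      moreover have "adj w = w" using y sx unfolding w f_def S_def
        by (simp add: adj_scaleR adj_add adj_mult)
      moreover have "norm w \<le> r"
      proof -
        have ny: "norm y \<le> r" using y unfolding S_def by auto
        have "norm (x + y * y) \<le> norm x + norm y * norm y"
          by (metis add_left_mono norm_mult_ineq norm_triangle_ineq order_trans)
        also have "\<dots> \<le> norm x + r * r" using ny by (simp add: mult_mono')
        finally have "norm (x + y * y) / 2 \<le> r" using rr by simp
        then show ?thesis unfolding w f_def by simp
      qed
      ultimately show "w \<in> S" unfolding S_def by auto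
    qed
    fix y w assume y: "y \<in> S" and w: "w \<in> S"
    have yw: "y * w = w * y" using y w Dcomm unfolding S_def by auto
    have "(y - w) * (y + w) = y * y + y * w - (w * y + w * w)"
      by (simp add: left_diff_distrib distrib_left)
    also have "\<dots> = y * y - w * w" using yw by simp
    finally have e1: "(y - w) * (y + w) = y * y - w * w" .
    have eq: "f y - f w = (1/2::real) *\<^sub>R ((y - w) * (y + w))"
      unfolding f_def e1 by (simp add: scaleR_right_diff_distrib scaleR_right_distrib)
    have "norm ((y - w) * (y + w)) \<le> norm (y - w) * (2 * r)"
    proof -
      have "norm (y + w) \<le> 2 * r" using y w unfolding S_def
        by (smt (verit) mem_Collect_eq norm_triangle_ineq)
      then show ?thesis
        by (meson norm_ge_zero norm_mult_ineq order_trans mult_left_mono)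
    qed
    then show "dist (f y) (f w) \<le> r * dist y w"
      unfolding dist_norm eq by (simp add: mult_ac)
  qed
  then obtain y where y: "y \<in> S" and fy: "f y = y" by auto
  have ya: "y * a = a * y"
  proof -
    have "a * x = x * a" unfolding x_def by (simp add: mult.assoc)
    moreover have "y \<in> D" using y unfolding S_def by blast
    ultimately show ?thesis unfolding D_def by blast
  qed
  have yadj: "adj y = y" using y unfolding S_def by auto
  have y2: "y + y = x + y * y"
  proof -
    have "(2::real) *\<^sub>R f y = 2 *\<^sub>R y" using fy by simp
    then show ?thesis unfolding f_def by (simp add: scaleR_2)
  qed
  have "(1 - y) * (1 - y) = 1 - (y + y) + y * y" by (simp add: left_diff_distrib right_diff_distrib)
  also have "\<dots> = 1 - x" using y2 by simp
  finally have ss: "(1 - y) * (1 - y) = 1 - a * a" unfolding x_def .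
  have "(1 - y) * a = a * (1 - y)" using ya by (simp add: left_diff_distrib right_diff_distrib)
  moreover have "adj (1 - y) = 1 - y" using yadj by simp
  ultimately show ?thesis using ss by blast
qed

lemma star_hom_add: "star_hom f \<Longrightarrow> f (a + b) = f a + f b"
  and star_hom_mult: "star_hom f \<Longrightarrow> f (a * b) = f a * f b"
  and star_hom_scaleR: "star_hom f \<Longrightarrow> f (r *\<^sub>R a) = r *\<^sub>R f a"
  and star_hom_adj: "star_hom f \<Longrightarrow> f (adj a) = adj (f a)"
  unfolding star_hom_def by auto

lemma star_hom_zero: "star_hom f \<Longrightarrow> f 0 = 0"
  using star_hom_scaleR[of f 0 0] by simp

lemma star_hom_contr1:
  fixes \<phi> :: "'a::cstar_algebra \<Rightarrow> 'b::cstar_algebra"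
  assumes hom: "star_hom \<phi>" and one: "\<phi> 1 = 1" and sa: "adj a = a" and na: "norm a < 1"
  shows "norm (\<phi> a) \<le> 1"
proof -
  obtain s where ss: "adj s = s" and s2: "s * s = 1 - a * a" and sa': "s * a = a * s"
    using sqrt_exists[OF sa na] by blast
  define b where "b = \<phi> a"
  define t where "t = \<phi> s"
  have hb: "adj b = b" unfolding b_def using star_hom_adj[OF hom, of a] sa by simp
  have ht: "adj t = t" unfolding t_def using star_hom_adj[OF hom, of s] ss by simp
  have bt: "b * t = t * b" unfolding b_def t_def
    using star_hom_mult[OF hom, of a s] star_hom_mult[OF hom, of s a] sa' by simp
  have btt: "b * b + t * t = 1"
  proof -
    have "a * a + s * s = 1" using s2 by simp
    then have "\<phi> (a * a + s * s) = 1" using one by simp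
    then show ?thesis unfolding b_def t_def
      by (simp add: star_hom_add[OF hom] star_hom_mult[OF hom])
  qed
  define u where "u = b + iu * t"
  have au: "adj u = b - iu * t" unfolding u_def
    by (simp add: adj_add iu_adj_mult hb ht)
  have c1: "b * (iu * t) = iu * (b * t)"
    by (metis mult.assoc iu_central)
  have c2: "(iu * t) * b = iu * (b * t)"
    by (simp add: mult.assoc bt)
  have c3: "(iu * t) * (iu * t) = - (t * t)"
  proof -
    have "(iu * t) * (iu * t) = (iu * iu) * (t * t)"
      by (metis mult.assoc iu_central)
    then show ?thesis by (simp add: iu_square)
  qed
  have uu1: "adj u * u = 1"
  proof -
    have "adj u * u = b * b + b * (iu * t) - (iu * t) * b - (iu * t) * (iu * t)"
      unfolding au unfolding u_def by (simp add: left_diff_distrib distrib_left)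
    also have "\<dots> = b * b + t * t" unfolding c1 c2 c3 by simp
    finally show ?thesis using btt by simp
  qed
  have nu: "norm u = 1"
  proof -
    have "(norm u)\<^sup>2 = 1" using cstar_identity[of u] uu1 by simp
    then have "norm u = 1 \<or> norm u = -1" by (simp add: power2_eq_1_iff)
    then show ?thesis using norm_ge_zero[of u] by linarith
  qed
  have "2 *\<^sub>R b = u + adj u" unfolding au unfolding u_def by (simp add: scaleR_2)
  then have "norm (2 *\<^sub>R b) \<le> norm u + norm (adj u)" using norm_triangle_ineq[of u "adj u"] by simp
  then have "2 * norm b \<le> 2" using nu by simp
  then show ?thesis unfolding b_def by simp
qed

lemma star_hom_contr2:
  fixes \<phi> :: "'a::cstar_algebra \<Rightarrow> 'b::cstar_algebra"
  assumes hom: "star_hom \<phi>" and one: "\<phi> 1 = 1" and sa: "adj h = h"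
  shows "norm (\<phi> h) \<le> 2 * norm h"
proof (cases "h = 0")
  case True then show ?thesis using star_hom_zero[OF hom] by simp
next
  case False
  define c where "c = 1 / (2 * norm h)"
  have c0: "c > 0" using False unfolding c_def by simp
  have "adj (c *\<^sub>R h) = c *\<^sub>R h" using sa by (simp add: adj_scaleR)
  moreover have "norm (c *\<^sub>R h) < 1" using False unfolding c_def by simp
  ultimately have "norm (\<phi> (c *\<^sub>R h)) \<le> 1" by (rule star_hom_contr1[OF hom one])
  then have "c * norm (\<phi> h) \<le> 1" using c0 by (simp add: star_hom_scaleR[OF hom])
  then show ?thesis using False unfolding c_def by (simp add: field_simps)
qed

lemma star_hom_bounded_linear:
  fixes \<phi> :: "'a::cstar_algebra \<Rightarrow> 'b::cstar_algebra"
  assumes hom: "star_hom \<phi>" and one: "\<phi> 1 = 1"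
  shows "bounded_linear \<phi>"
proof (rule bounded_linear_intro[where K=2])
  show "\<phi> (x + y) = \<phi> x + \<phi> y" for x y by (rule star_hom_add[OF hom])
  show "\<phi> (r *\<^sub>R x) = r *\<^sub>R \<phi> x" for r x by (rule star_hom_scaleR[OF hom])
  fix a :: 'a
  have "(norm (\<phi> a))\<^sup>2 = norm (adj (\<phi> a) * \<phi> a)" by (simp add: cstar_identity)
  also have "\<dots> = norm (\<phi> (adj a * a))" by (simp add: star_hom_mult[OF hom] star_hom_adj[OF hom])
  also have "\<dots> \<le> 2 * norm (adj a * a)"
    by (rule star_hom_contr2[OF hom one]) (simp add: adj_mult adj_adj)
  also have "\<dots> = 2 * (norm a)\<^sup>2" by (simp add: cstar_identity)
  also have "\<dots> \<le> (norm a * 2)\<^sup>2" by (simp add: power2_eq_square)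
  finally show "norm (\<phi> a) \<le> norm a * 2"
    by (rule power2_le_imp_le) simp
qed

lemma os_zero: "operator_system S \<Longrightarrow> 0 \<in> S"
  and os_one: "operator_system S \<Longrightarrow> 1 \<in> S"
  and os_add: "operator_system S \<Longrightarrow> a \<in> S \<Longrightarrow> b \<in> S \<Longrightarrow> a + b \<in> S"
  and os_scaleR: "operator_system S \<Longrightarrow> a \<in> S \<Longrightarrow> r *\<^sub>R a \<in> S"
  and os_adj: "operator_system S \<Longrightarrow> a \<in> S \<Longrightarrow> adj a \<in> S"
  unfolding operator_system_def by auto

lemma os_sum:
  assumes os: "operator_system S" and f: "\<And>i. i \<in> I \<Longrightarrow> f i \<in> S"
  shows "sum f I \<in> S"
  using f
proof (induction I rule: infinite_finite_induct)
  case (infinite A)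
  then show ?case using os_zero[OF os] by simp
next
  case empty
  then show ?case using os_zero[OF os] by simp
next
  case (insert x F)
  then show ?case by (simp add: os_add[OF os])
qed

lemma mat_adj_dim[simp]: "dim_row (mat_adj X) = dim_col X" "dim_col (mat_adj X) = dim_row X"
  by (auto simp: mat_adj_def)

lemma mat_adj_index[simp]: "i < dim_col X \<Longrightarrow> j < dim_row X \<Longrightarrow> mat_adj X $$ (i,j) = adj (X $$ (j,i))"
  by (auto simp: mat_adj_def)

lemma mat_adj_carrier[simp]: "X \<in> carrier_mat n m \<Longrightarrow> mat_adj X \<in> carrier_mat m n"
  by (intro carrier_matI) (auto dest: carrier_matD)

lemma mat_adj_mult:
  fixes A :: "'a::cstar_algebra mat"
  assumes A: "A \<in> carrier_mat n k" and B: "B \<in> carrier_mat k m"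
  shows "mat_adj (A * B) = mat_adj B * mat_adj A"
proof (rule eq_matI)
  fix i j assume i: "i < dim_row (mat_adj B * mat_adj A)" and j: "j < dim_col (mat_adj B * mat_adj A)"
  then have i': "i < m" and j': "j < n" using A B by auto
  have "mat_adj (A * B) $$ (i, j) = adj (\<Sum>l\<in>{0..<k}. A $$ (j,l) * B $$ (l,i))"
    using A B i' j' by (simp add: scalar_prod_def)
  also have "\<dots> = (\<Sum>l\<in>{0..<k}. adj (B $$ (l,i)) * adj (A $$ (j,l)))"
    by (simp add: adj_sum adj_mult)
  also have "\<dots> = (mat_adj B * mat_adj A) $$ (i,j)"
    using A B i' j' by (simp add: scalar_prod_def)
  finally show "mat_adj (A * B) $$ (i, j) = (mat_adj B * mat_adj A) $$ (i, j)" .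
qed (use A B in auto)

lemma mat_adj_one[simp]: "mat_adj (1\<^sub>m n :: 'a::cstar_algebra mat) = 1\<^sub>m n"
  by (rule eq_matI) auto

lemma mat_adj_zero[simp]: "mat_adj (0\<^sub>m n m :: 'a::cstar_algebra mat) = 0\<^sub>m m n"
  by (rule eq_matI) auto

lemma mat_adj_four_block:
  fixes A :: "'a::cstar_algebra mat"
  assumes "A \<in> carrier_mat n1 m1" "B \<in> carrier_mat n1 m2" "C \<in> carrier_mat n2 m1" "D \<in> carrier_mat n2 m2"
  shows "mat_adj (four_block_mat A B C D) = four_block_mat (mat_adj A) (mat_adj C) (mat_adj B) (mat_adj D)"
  by (rule eq_matI) (use assms in auto)

lemma dsum_dim[simp]: "dim_row (X \<oplus>\<^sub>d Y) = dim_row X + dim_row Y" "dim_col (X \<oplus>\<^sub>d Y) = dim_col X + dim_col Y"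
  by (auto simp: dsum_def)

lemma dsum_carrier[simp,intro]: "X \<in> carrier_mat n1 m1 \<Longrightarrow> Y \<in> carrier_mat n2 m2 \<Longrightarrow> X \<oplus>\<^sub>d Y \<in> carrier_mat (n1+n2) (m1+m2)"
  by (intro carrier_matI) (auto dest: carrier_matD)

lemma dsum_index:
  "i < dim_row X + dim_row Y \<Longrightarrow> j < dim_col X + dim_col Y \<Longrightarrow> (X \<oplus>\<^sub>d Y) $$ (i,j) =
    (if i < dim_row X then if j < dim_col X then X $$ (i,j) else 0
     else if j < dim_col X then 0 else Y $$ (i - dim_row X, j - dim_col X))"
  by (auto simp: dsum_def)

lemma dsum_idx1: "i < dim_row X \<Longrightarrow> j < dim_col X \<Longrightarrow> (X \<oplus>\<^sub>d Y) $$ (i,j) = X $$ (i,j)"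
  by (simp add: dsum_index)
lemma dsum_idx2: "i < dim_row X \<Longrightarrow> dim_col X \<le> j \<Longrightarrow> j < dim_col X + dim_col Y \<Longrightarrow> (X \<oplus>\<^sub>d Y) $$ (i,j) = 0"
  by (simp add: dsum_index)
lemma dsum_idx3: "dim_row X \<le> i \<Longrightarrow> i < dim_row X + dim_row Y \<Longrightarrow> j < dim_col X \<Longrightarrow> (X \<oplus>\<^sub>d Y) $$ (i,j) = 0"
  by (simp add: dsum_index)
lemma dsum_idx4: "dim_row X \<le> i \<Longrightarrow> i < dim_row X + dim_row Y \<Longrightarrow> dim_col X \<le> j \<Longrightarrow> j < dim_col X + dim_col Y \<Longrightarrow>
   (X \<oplus>\<^sub>d Y) $$ (i,j) = Y $$ (i - dim_row X, j - dim_col X)"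
  by (simp add: dsum_index)

lemmas dsum_idx = dsum_idx1 dsum_idx2 dsum_idx3 dsum_idx4

lemma dsum_assoc: "(X \<oplus>\<^sub>d Y) \<oplus>\<^sub>d Z = X \<oplus>\<^sub>d (Y \<oplus>\<^sub>d Z)"
proof (rule eq_matI)
  fix i j assume i: "i < dim_row (X \<oplus>\<^sub>d (Y \<oplus>\<^sub>d Z))" and j: "j < dim_col (X \<oplus>\<^sub>d (Y \<oplus>\<^sub>d Z))"
  have "i < dim_row X \<or> (dim_row X \<le> i \<and> i < dim_row X + dim_row Y) \<or> dim_row X + dim_row Y \<le> i"
    by linarith
  moreover have "j < dim_col X \<or> (dim_col X \<le> j \<and> j < dim_col X + dim_col Y) \<or> dim_col X + dim_col Y \<le> j"
    by linarith
  ultimately show "((X \<oplus>\<^sub>d Y) \<oplus>\<^sub>d Z) $$ (i, j) = (X \<oplus>\<^sub>d (Y \<oplus>\<^sub>d Z)) $$ (i, j)"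
    using i j by (elim disjE conjE; simp add: dsum_idx)
qed auto

lemma one_dsum_one: "1\<^sub>m a \<oplus>\<^sub>d 1\<^sub>m b = 1\<^sub>m (a + b)"
  unfolding dsum_def by (simp add: four_block_one_mat)

lemma dsum_one_zero: "X \<oplus>\<^sub>d 1\<^sub>m 0 = X"
  by (rule eq_matI) (auto simp: dsum_idx1)

lemma mat_adj_dsum: "mat_adj (X \<oplus>\<^sub>d Y) = mat_adj X \<oplus>\<^sub>d (mat_adj Y :: 'a::cstar_algebra mat)"
proof (rule eq_matI)
  fix i j assume i: "i < dim_row (mat_adj X \<oplus>\<^sub>d mat_adj Y)" and j: "j < dim_col (mat_adj X \<oplus>\<^sub>d mat_adj Y)"
  have "i < dim_col X \<or> dim_col X \<le> i" by linarith
  moreover have "j < dim_row X \<or> dim_row X \<le> j" by linarith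
  ultimately show "mat_adj (X \<oplus>\<^sub>d Y) $$ (i, j) = (mat_adj X \<oplus>\<^sub>d mat_adj Y) $$ (i, j)"
    using i j by (elim disjE; simp add: dsum_idx)
qed auto

lemma dsum_mult:
  fixes X :: "'a::semiring_1 mat"
  assumes "X \<in> carrier_mat n1 m1" "X' \<in> carrier_mat m1 k1" "Y \<in> carrier_mat n2 m2" "Y' \<in> carrier_mat m2 k2"
  shows "(X \<oplus>\<^sub>d Y) * (X' \<oplus>\<^sub>d Y') = (X * X') \<oplus>\<^sub>d (Y * Y')"
  unfolding dsum_def
  by (subst mult_four_block_mat[of _ n1 m1 _ m2 _ n2]) (use assms in auto)

lemma invertible_inv:
  fixes A :: "'a::semiring_1 mat"
  assumes "invertible_mat A" "A \<in> carrier_mat n n"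
  shows "\<exists>B \<in> carrier_mat n n. A * B = 1\<^sub>m n \<and> B * A = 1\<^sub>m n"
proof -
  obtain B where 1: "A * B = 1\<^sub>m n" and 2: "B * A = 1\<^sub>m (dim_row B)"
    using assms unfolding invertible_mat_def inverts_mat_def by auto
  have "dim_col B = n" using 1 by (metis index_mult_mat(3) index_one_mat(3))
  moreover have "dim_row B = n" using 2 assms(2) by (metis carrier_matD(2) index_mult_mat(3) index_one_mat(3))
  ultimately show ?thesis using 1 2 by (intro bexI[of _ B]) auto
qed

lemma invertible_intro:
  fixes A :: "'a::semiring_1 mat"
  assumes "A \<in> carrier_mat n n" "B \<in> carrier_mat n n" "A * B = 1\<^sub>m n" "B * A = 1\<^sub>m n"
  shows "invertible_mat A"
  using assms unfolding invertible_mat_def inverts_mat_def by auto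

lemma invertible_dsum:
  fixes X :: "'a::semiring_1 mat"
  assumes "invertible_mat X" "X \<in> carrier_mat n n" "invertible_mat Y" "Y \<in> carrier_mat m m"
  shows "invertible_mat (X \<oplus>\<^sub>d Y)"
proof -
  obtain X' where X': "X' \<in> carrier_mat n n" "X * X' = 1\<^sub>m n" "X' * X = 1\<^sub>m n"
    using invertible_inv[OF assms(1,2)] by blast
  obtain Y' where Y': "Y' \<in> carrier_mat m m" "Y * Y' = 1\<^sub>m m" "Y' * Y = 1\<^sub>m m"
    using invertible_inv[OF assms(3,4)] by blast
  show ?thesis
    by (rule invertible_intro[of _ "n+m" "X' \<oplus>\<^sub>d Y'"])
      (use assms X' Y' in \<open>auto simp: dsum_mult one_dsum_one\<close>)
qed

lemma invertible_mult:
  fixes A :: "'a::semiring_1 mat"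
  assumes "invertible_mat A" "A \<in> carrier_mat n n" "invertible_mat B" "B \<in> carrier_mat n n"
  shows "invertible_mat (A * B)"
proof -
  obtain A' where A': "A' \<in> carrier_mat n n" "A * A' = 1\<^sub>m n" "A' * A = 1\<^sub>m n"
    using invertible_inv[OF assms(1,2)] by blast
  obtain B' where B': "B' \<in> carrier_mat n n" "B * B' = 1\<^sub>m n" "B' * B = 1\<^sub>m n"
    using invertible_inv[OF assms(3,4)] by blast
  have "(A * B) * (B' * A') = A * (B * (B' * A'))"
    by (rule assoc_mult_mat) (use assms A' B' in auto)
  also have "B * (B' * A') = (B * B') * A'"
    by (rule assoc_mult_mat[symmetric]) (use assms A' B' in auto)
  finally have 1: "(A * B) * (B' * A') = 1\<^sub>m n" using assms A' B' by simp
  have "(B' * A') * (A * B) = B' * (A' * (A * B))"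
    by (rule assoc_mult_mat) (use assms A' B' in auto)
  also have "A' * (A * B) = (A' * A) * B"
    by (rule assoc_mult_mat[symmetric]) (use assms A' B' in auto)
  finally have 2: "(B' * A') * (A * B) = 1\<^sub>m n" using assms A' B' by simp
  show ?thesis by (rule invertible_intro[OF _ _ 1 2]) (use assms A' B' in auto)
qed

lemma invertible_one: "invertible_mat (1\<^sub>m n :: 'a::semiring_1 mat)"
  by (rule invertible_intro[of _ n "1\<^sub>m n"]) auto

lemma entries_iff: "mat_entries X \<subseteq> S \<longleftrightarrow> (\<forall>i<dim_row X. \<forall>j<dim_col X. X $$ (i,j) \<in> S)"
  unfolding mat_entries_def by auto

lemma hf_carrier: "hermitian_form S n X \<Longrightarrow> X \<in> carrier_mat n n"
  unfolding hermitian_form_def by auto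

lemma hf_entry: "hermitian_form S n X \<Longrightarrow> i < n \<Longrightarrow> j < n \<Longrightarrow> X $$ (i,j) \<in> S"
  unfolding hermitian_form_def entries_iff by auto

lemma hf_dsum:
  assumes os: "operator_system S" and X: "hermitian_form S n X" and Y: "hermitian_form S m Y"
  shows "hermitian_form S (n+m) (X \<oplus>\<^sub>d Y)"
proof -
  have c: "X \<in> carrier_mat n n" "Y \<in> carrier_mat m m" using X Y by (auto simp: hermitian_form_def)
  have "mat_entries (X \<oplus>\<^sub>d Y) \<subseteq> S"
    unfolding entries_iff
  proof (intro allI impI)
    fix i j assume i: "i < dim_row (X \<oplus>\<^sub>d Y)" and j: "j < dim_col (X \<oplus>\<^sub>d Y)"
    have "i < n \<or> n \<le> i" by linarith
    moreover have "j < n \<or> n \<le> j" by linarith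
    ultimately show "(X \<oplus>\<^sub>d Y) $$ (i, j) \<in> S"
      using i j c hf_entry[OF X] hf_entry[OF Y] os_zero[OF os]
      by (elim disjE; simp add: dsum_idx)
  qed
  moreover have "mat_adj (X \<oplus>\<^sub>d Y) = X \<oplus>\<^sub>d Y"
    using X Y by (simp add: mat_adj_dsum hermitian_form_def)
  moreover have "invertible_mat (X \<oplus>\<^sub>d Y)"
    using X Y c by (intro invertible_dsum) (auto simp: hermitian_form_def)
  ultimately show ?thesis using c unfolding hermitian_form_def by auto
qed

lemma hf_one:
  assumes os: "operator_system S"
  shows "hermitian_form S n (1\<^sub>m n)"
  unfolding hermitian_form_def entries_iff using os_zero[OF os] os_one[OF os] invertible_one
  by auto

lemma continuous_on_if_const[continuous_intros]:
  "continuous_on T f \<Longrightarrow> continuous_on T g \<Longrightarrow> continuous_on T (\<lambda>t. if P then f t else g t)"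
  by (cases P) auto

lemma hh_refl: "hermitian_form S k X \<Longrightarrow> herm_homotopic S k X X"
  unfolding herm_homotopic_def by (intro exI[of _ "\<lambda>t. X"]) auto

lemma hh_sym:
  fixes S :: "'a::cstar_algebra set"
  assumes "herm_homotopic S k X Y" shows "herm_homotopic S k Y X"
proof -
  obtain g :: "real \<Rightarrow> 'a mat" where g: "\<forall>t\<in>{0..1}. hermitian_form S k (g t)"
    "\<forall>i<k. \<forall>j<k. continuous_on {0..1} (\<lambda>t. g t $$ (i,j))" "g 0 = X" "g 1 = Y"
    using assms unfolding herm_homotopic_def by blast
  define h where "h t = g (1 - t)" for t
  have 1: "\<forall>t\<in>{0..1}. hermitian_form S k (h t)"
  proof
    fix t :: real assume "t \<in> {0..1}"
    then have "1 - t \<in> {0..1}" by simp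
    then show "hermitian_form S k (h t)" unfolding h_def using g(1) by blast
  qed
  have 2: "\<forall>i<k. \<forall>j<k. continuous_on {0..1} (\<lambda>t. h t $$ (i,j))"
  proof (intro allI impI)
    fix i j assume "i < k" "j < k"
    then have c: "continuous_on {0..1} (\<lambda>t. g t $$ (i,j))" using g(2) by blast
    have im: "(\<lambda>t. 1 - t) ` {0..1::real} \<subseteq> {0..1}" by auto
    have c2: "continuous_on {0..1::real} (\<lambda>t. 1 - t)" by (intro continuous_intros)
    show "continuous_on {0..1} (\<lambda>t. h t $$ (i,j))"
      unfolding h_def by (rule continuous_on_compose2[OF c c2 im])
  qed
  have 3: "h 0 = Y" "h 1 = X" unfolding h_def using g by simp_all
  show ?thesis unfolding herm_homotopic_def using 1 2 3 by blast
qed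

lemma hh_trans:
  fixes S :: "'a::cstar_algebra set"
  assumes "herm_homotopic S k X Y" "herm_homotopic S k Y Z" shows "herm_homotopic S k X Z"
proof -
  obtain g :: "real \<Rightarrow> 'a mat" where g: "\<forall>t\<in>{0..1}. hermitian_form S k (g t)"
    "\<forall>i<k. \<forall>j<k. continuous_on {0..1} (\<lambda>t. g t $$ (i,j))" "g 0 = X" "g 1 = Y"
    using assms(1) unfolding herm_homotopic_def by blast
  obtain h :: "real \<Rightarrow> 'a mat" where h: "\<forall>t\<in>{0..1}. hermitian_form S k (h t)"
    "\<forall>i<k. \<forall>j<k. continuous_on {0..1} (\<lambda>t. h t $$ (i,j))" "h 0 = Y" "h 1 = Z"
    using assms(2) unfolding herm_homotopic_def by blast
  show ?thesis unfolding herm_homotopic_def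
  proof (intro exI[of _ "\<lambda>t. if t \<le> 1/2 then g (2 * t) else h (2 * t - 1)"] conjI allI impI ballI)
    fix t :: real assume "t \<in> {0..1}"
    then show "hermitian_form S k (if t \<le> 1/2 then g (2 * t) else h (2 * t - 1))"
      using g(1) h(1) by auto
  next
    fix i j assume ij: "i < k" "j < k"
    then have cg: "continuous_on {0..1} (\<lambda>t. g t $$ (i,j))"
      and ch: "continuous_on {0..1} (\<lambda>t. h t $$ (i,j))" using g h by auto
    have e: "(\<lambda>t. (if t \<le> 1/2 then g (2 * t) else h (2 * t - 1)) $$ (i, j))
        = (\<lambda>t. if t \<le> 1/2 then g (2 * t) $$ (i,j) else h (2 * t - 1) $$ (i,j))"
      by auto
    show "continuous_on {0..1} (\<lambda>t. (if t \<le> 1/2 then g (2 * t) else h (2 * t - 1)) $$ (i, j))"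
      unfolding e
    proof (rule continuous_on_cases_1)
      show "continuous_on {t \<in> {0..1}. t \<le> 1 / 2} (\<lambda>t. g (2 * t) $$ (i, j))"
        by (rule continuous_on_compose2[OF cg, of _ "\<lambda>t. 2 * t"]) (auto intro!: continuous_intros)
      show "continuous_on {t \<in> {0..1}. 1 / 2 \<le> t} (\<lambda>t. h (2 * t - 1) $$ (i, j))"
        by (rule continuous_on_compose2[OF ch, of _ "\<lambda>t. 2 * t - 1"]) (auto intro!: continuous_intros)
      show "g (2 * (1 / 2)) $$ (i, j) = h (2 * (1 / 2) - 1) $$ (i, j)" using g h by simp
    qed
  qed (use g h in auto)
qed

lemma hh_dsum:
  fixes S :: "'a::cstar_algebra set"
  assumes os: "operator_system S"
    and "herm_homotopic S m X X'" "herm_homotopic S n Y Y'"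
  shows "herm_homotopic S (m + n) (X \<oplus>\<^sub>d Y) (X' \<oplus>\<^sub>d Y')"
proof -
  obtain g :: "real \<Rightarrow> 'a mat" where g: "\<forall>t\<in>{0..1}. hermitian_form S m (g t)"
    "\<forall>i<m. \<forall>j<m. continuous_on {0..1} (\<lambda>t. g t $$ (i,j))" "g 0 = X" "g 1 = X'"
    using assms(2) unfolding herm_homotopic_def by blast
  obtain h :: "real \<Rightarrow> 'a mat" where h: "\<forall>t\<in>{0..1}. hermitian_form S n (h t)"
    "\<forall>i<n. \<forall>j<n. continuous_on {0..1} (\<lambda>t. h t $$ (i,j))" "h 0 = Y" "h 1 = Y'"
    using assms(3) unfolding herm_homotopic_def by blast
  show ?thesis unfolding herm_homotopic_def
  proof (intro exI[of _ "\<lambda>t. g t \<oplus>\<^sub>d h t"] conjI allI impI ballI)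
    fix t :: real assume "t \<in> {0..1}"
    then show "hermitian_form S (m + n) (g t \<oplus>\<^sub>d h t)" using g(1) h(1) hf_dsum[OF os] by auto
  next
    fix i j assume ij: "i < m + n" "j < m + n"
    have e: "continuous_on {0..1} (\<lambda>t. (if i < m then if j < m then g t $$ (i,j) else 0
         else if j < m then 0 else h t $$ (i - m, j - m)))"
      using g(2) h(2) ij by (cases "i < m"; cases "j < m"; simp)
    show "continuous_on {0..1} (\<lambda>t. (g t \<oplus>\<^sub>d h t) $$ (i, j))"
    proof (rule continuous_on_cong[THEN iffD1, OF refl _ e])
      fix t :: real assume "t \<in> {0..1}"
      then have "g t \<in> carrier_mat m m" "h t \<in> carrier_mat n n"
        using g(1) h(1) hf_carrier[of S m "g t"] hf_carrier[of S n "h t"] by auto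
      then show "(if i < m then if j < m then g t $$ (i,j) else 0
         else if j < m then 0 else h t $$ (i - m, j - m)) = (g t \<oplus>\<^sub>d h t) $$ (i, j)"
        using ij by (simp add: dsum_index)
    qed
  qed (use g h in auto)
qed

section \<open>Rotation matrices and the swap homotopy\<close>

definition sc :: "nat \<Rightarrow> real \<Rightarrow> 'a::cstar_algebra mat" where
  "sc m r = mat m m (\<lambda>(i,j). if i = j then r *\<^sub>R 1 else 0)"

definition rs :: "real \<Rightarrow> 'a::cstar_algebra mat \<Rightarrow> 'a mat" where
  "rs r A = map_mat (\<lambda>x. r *\<^sub>R x) A"

definition rot :: "nat \<Rightarrow> real \<Rightarrow> real \<Rightarrow> 'a::cstar_algebra mat" where
  "rot m c s = four_block_mat (sc m c) (sc m (-s)) (sc m s) (sc m c)"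

lemma sc_carrier[simp]: "sc m r \<in> carrier_mat m m"
  by (simp add: sc_def)

lemma sc_dim[simp]: "dim_row (sc m r) = m" "dim_col (sc m r) = m"
  by (auto simp: sc_def)

lemma sc_index[simp]: "i < m \<Longrightarrow> j < m \<Longrightarrow> sc m r $$ (i,j) = (if i = j then r *\<^sub>R 1 else 0)"
  by (simp add: sc_def)

lemma sc_mult_left:
  assumes A: "A \<in> carrier_mat m n"
  shows "sc m r * A = rs r A"
proof (rule eq_matI)
  fix i j assume i: "i < dim_row (rs r A)" and j: "j < dim_col (rs r A)"
  then have i': "i < m" and j': "j < n" using A by (auto simp: rs_def)
  have "(sc m r * A) $$ (i,j) = (\<Sum>l\<in>{0..<m}. (if i = l then r *\<^sub>R 1 else 0) * A $$ (l,j))"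
    using A i' j' by (simp add: scalar_prod_def)
  also have "\<dots> = (\<Sum>l\<in>{0..<m}. if i = l then r *\<^sub>R A $$ (l,j) else 0)"
    by (intro sum.cong) auto
  also have "\<dots> = r *\<^sub>R A $$ (i,j)" using i' by simp
  finally show "(sc m r * A) $$ (i,j) = rs r A $$ (i,j)" using A i' j' by (simp add: rs_def)
qed (use A in \<open>auto simp: rs_def\<close>)

lemma sc_mult_right:
  assumes A: "A \<in> carrier_mat n m"
  shows "A * sc m r = rs r A"
proof (rule eq_matI)
  fix i j assume i: "i < dim_row (rs r A)" and j: "j < dim_col (rs r A)"
  then have i': "i < n" and j': "j < m" using A by (auto simp: rs_def)
  have "(A * sc m r) $$ (i,j) = (\<Sum>l\<in>{0..<m}. A $$ (i,l) * (if l = j then r *\<^sub>R 1 else 0))"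
    using A i' j' by (simp add: scalar_prod_def)
  also have "\<dots> = (\<Sum>l\<in>{0..<m}. if l = j then r *\<^sub>R A $$ (i,l) else 0)"
    by (intro sum.cong) auto
  also have "\<dots> = r *\<^sub>R A $$ (i,j)" using j' by simp
  finally show "(A * sc m r) $$ (i,j) = rs r A $$ (i,j)" using A i' j' by (simp add: rs_def)
qed (use A in \<open>auto simp: rs_def\<close>)

lemma rot_carrier[simp]: "rot m c s \<in> carrier_mat (m+m) (m+m)"
  unfolding rot_def by auto

lemma sc_sc: "sc m a * sc m b = sc m (a * b)"
  by (simp add: sc_mult_left[OF sc_carrier]) (rule eq_matI, auto simp: rs_def)

lemma sc_add: "sc m a + sc m b = sc m (a + b)"
  by (rule eq_matI) (auto simp: scaleR_left_distrib)

lemma sc_one: "sc m 1 = 1\<^sub>m m"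
  by (rule eq_matI) auto

lemma sc_zero: "sc m 0 = 0\<^sub>m m m"
  by (rule eq_matI) auto

lemma rot_mult:
  assumes cs: "s * s = 1 - c * c"
  shows "rot m c s * rot m c (-s) = (1\<^sub>m (m+m) :: 'a::cstar_algebra mat)"
proof -
  have e1: "c * c + (- s) * (- s) = 1" "c * s + (- s) * c = 0" "s * c + c * (- s) = 0" "s * s + c * c = 1"
    using cs by (auto simp: algebra_simps)
  have "rot m c s * rot m c (-s) = four_block_mat
     (sc m c * sc m c + sc m (-s) * sc m (-s)) (sc m c * sc m s + sc m (-s) * sc m c)
     (sc m s * sc m c + sc m c * sc m (-s)) (sc m s * sc m s + sc m c * sc m c)"
    unfolding rot_def by (subst mult_four_block_mat[of _ m m _ m _ m]) auto
  also have "\<dots> = four_block_mat (sc m (c * c + (- s) * (- s))) (sc m (c * s + (- s) * c))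
     (sc m (s * c + c * (- s))) (sc m (s * s + c * c))"
    by (simp only: sc_sc sc_add)
  also have "\<dots> = (1\<^sub>m (m+m) :: 'a mat)"
    by (simp only: e1 sc_one sc_zero four_block_one_mat)
  finally show ?thesis .
qed

lemma mat_adj_sc[simp]: "mat_adj (sc m r) = sc m r"
  by (rule eq_matI) auto

lemma mat_adj_rot: "mat_adj (rot m c s) = rot m c (-s)"
  unfolding rot_def by (subst mat_adj_four_block[of _ m m]) auto

lemma rot_invertible:
  assumes cs: "s * s = 1 - c * c"
  shows "invertible_mat (rot m c s :: 'a::cstar_algebra mat)"
  by (rule invertible_intro[of _ "m+m" "rot m c (-s)"]) (use cs rot_mult[of s c m] rot_mult[of "-s" c m] in auto)

lemma rot_conj:
  assumes "Z1 \<in> carrier_mat m m" "Z2 \<in> carrier_mat m m"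
  shows "rot m c s * (Z1 \<oplus>\<^sub>d Z2) * rot m c (-s) =
    four_block_mat (rs (c * c) Z1 + rs (s * s) Z2) (rs (c * s) Z1 + rs (-(s * c)) Z2)
                   (rs (s * c) Z1 + rs (-(c * s)) Z2) (rs (s * s) Z1 + rs (c * c) Z2)"
  unfolding rot_def dsum_def
  apply (subst mult_four_block_mat[of _ m m _ m _ m])
  apply (use assms in auto)
  apply (subst mult_four_block_mat[of _ m m _ m _ m])
  apply (use assms in \<open>auto simp: sc_mult_left rs_def\<close>)
  apply (simp_all add: sc_mult_left sc_mult_right rs_def)
  apply (rule eq_matI)
  apply (use assms in \<open>auto simp: scaleR_scaleR algebra_simps\<close>)
  done

lemma rs_index[simp]: "i < dim_row A \<Longrightarrow> j < dim_col A \<Longrightarrow> rs r A $$ (i,j) = r *\<^sub>R A $$ (i,j)"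
  and rs_dim[simp]: "dim_row (rs r A) = dim_row A" "dim_col (rs r A) = dim_col A"
  by (auto simp: rs_def)

lemma hh_swap:
  fixes S :: "'a::cstar_algebra set"
  assumes os: "operator_system S" and Z1: "hermitian_form S m Z1" and Z2: "hermitian_form S m Z2"
  shows "herm_homotopic S (m + m) (Z1 \<oplus>\<^sub>d Z2) (Z2 \<oplus>\<^sub>d Z1)"
proof -
  have c1: "Z1 \<in> carrier_mat m m" and c2: "Z2 \<in> carrier_mat m m"
    using Z1 Z2 hf_carrier by auto
  have d1: "dim_row Z1 = m" "dim_col Z1 = m" and d2: "dim_row Z2 = m" "dim_col Z2 = m"
    using c1 c2 by auto
  define c where "c t = cos (t * pi / 2)" for t :: real
  define s where "s t = sin (t * pi / 2)" for t :: real
  have cs: "s t * s t = 1 - c t * c t" for t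
    unfolding c_def s_def using sin_cos_squared_add3[of "t * pi / 2"] by linarith
  define G where "G t = four_block_mat (rs (c t * c t) Z1 + rs (s t * s t) Z2) (rs (c t * s t) Z1 + rs (-(s t * c t)) Z2)
                   (rs (s t * c t) Z1 + rs (-(c t * s t)) Z2) (rs (s t * s t) Z1 + rs (c t * c t) Z2)" for t
  have GP: "G t = rot m (c t) (s t) * (Z1 \<oplus>\<^sub>d Z2) * rot m (c t) (- s t)" for t
    unfolding G_def using rot_conj[OF c1 c2] by simp
  have Dc: "Z1 \<oplus>\<^sub>d Z2 \<in> carrier_mat (m+m) (m+m)" using c1 c2 by auto
  have Dadj: "mat_adj (Z1 \<oplus>\<^sub>d Z2) = Z1 \<oplus>\<^sub>d Z2"
    using Z1 Z2 by (simp add: mat_adj_dsum hermitian_form_def)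
  have Dinv: "invertible_mat (Z1 \<oplus>\<^sub>d Z2)"
    using Z1 Z2 c1 c2 by (intro invertible_dsum) (auto simp: hermitian_form_def)
  have entry: "\<And>a b i j. i < m \<Longrightarrow> j < m \<Longrightarrow> a *\<^sub>R Z1 $$ (i,j) + b *\<^sub>R Z2 $$ (i,j) \<in> S"
    by (intro os_add[OF os] os_scaleR[OF os] hf_entry[OF Z1] hf_entry[OF Z2])
  have entry': "\<And>a b i j. i < m \<Longrightarrow> j < m \<Longrightarrow> a *\<^sub>R Z1 $$ (i,j) - b *\<^sub>R Z2 $$ (i,j) \<in> S"
    using entry by (metis scaleR_minus_left diff_conv_add_uminus)
  have Gidx: "i < m + m \<Longrightarrow> j < m + m \<Longrightarrow> G t $$ (i,j) =
     (if i < m then if j < m then (c t * c t) *\<^sub>R Z1 $$ (i,j) + (s t * s t) *\<^sub>R Z2 $$ (i,j)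
        else (c t * s t) *\<^sub>R Z1 $$ (i,j-m) + (-(s t * c t)) *\<^sub>R Z2 $$ (i,j-m)
      else if j < m then (s t * c t) *\<^sub>R Z1 $$ (i-m,j) + (-(c t * s t)) *\<^sub>R Z2 $$ (i-m,j)
        else (s t * s t) *\<^sub>R Z1 $$ (i-m,j-m) + (c t * c t) *\<^sub>R Z2 $$ (i-m,j-m))" for i j t
    unfolding G_def by (simp add: d1 d2)
  have Gdim: "G t \<in> carrier_mat (m+m) (m+m)" for t
    unfolding G_def by (intro carrier_matI) (simp_all add: d1 d2)
  have hf: "hermitian_form S (m+m) (G t)" for t
  proof -
    let ?R = "rot m (c t) (s t) :: 'a mat"
    let ?RT = "rot m (c t) (- s t) :: 'a mat"
    have RD: "?R * (Z1 \<oplus>\<^sub>d Z2) \<in> carrier_mat (m+m) (m+m)" by (rule mult_carrier_mat[OF rot_carrier Dc])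
    have "mat_adj (G t) = mat_adj ?RT * mat_adj (?R * (Z1 \<oplus>\<^sub>d Z2))"
      unfolding GP by (rule mat_adj_mult[OF RD rot_carrier])
    also have "\<dots> = ?R * (mat_adj (Z1 \<oplus>\<^sub>d Z2) * mat_adj ?R)"
      by (subst mat_adj_mult[OF rot_carrier Dc]) (auto simp: mat_adj_rot)
    also have "\<dots> = ?R * ((Z1 \<oplus>\<^sub>d Z2) * ?RT)" by (simp add: Dadj mat_adj_rot)
    also have "\<dots> = G t" unfolding GP
      by (rule assoc_mult_mat[symmetric, of _ "m+m" "m+m" _ "m+m" _ "m+m"]) (use Dc in auto)
    finally have adj: "mat_adj (G t) = G t" .
    have i1: "invertible_mat (?R * (Z1 \<oplus>\<^sub>d Z2))"
      by (rule invertible_mult[OF rot_invertible[OF cs] rot_carrier Dinv Dc])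
    have i2: "invertible_mat ?RT" by (rule rot_invertible) (simp add: cs)
    have inv: "invertible_mat (G t)" unfolding GP
      by (rule invertible_mult[OF i1 RD i2 rot_carrier])
    have ent: "mat_entries (G t) \<subseteq> S"
      unfolding entries_iff
    proof (intro allI impI)
      fix i j assume i: "i < dim_row (G t)" and j: "j < dim_col (G t)"
      then have i': "i < m + m" and j': "j < m + m" using Gdim[of t] by auto
      have "i < m \<or> m \<le> i" by linarith
      moreover have "j < m \<or> m \<le> j" by linarith
      ultimately show "G t $$ (i,j) \<in> S"
        using i' j' by (elim disjE; simp add: Gidx entry entry')
    qed
    show ?thesis unfolding hermitian_form_def using Gdim ent adj inv by auto
  qed
  have cont: "continuous_on {0..1} (\<lambda>t. G t $$ (i,j))" if "i < m + m" "j < m + m" for i j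
  proof -
    have eq: "(\<lambda>t. G t $$ (i,j)) = (\<lambda>t. (if i < m then if j < m then (c t * c t) *\<^sub>R Z1 $$ (i,j) + (s t * s t) *\<^sub>R Z2 $$ (i,j)
        else (c t * s t) *\<^sub>R Z1 $$ (i,j-m) + (-(s t * c t)) *\<^sub>R Z2 $$ (i,j-m)
      else if j < m then (s t * c t) *\<^sub>R Z1 $$ (i-m,j) + (-(c t * s t)) *\<^sub>R Z2 $$ (i-m,j)
        else (s t * s t) *\<^sub>R Z1 $$ (i-m,j-m) + (c t * c t) *\<^sub>R Z2 $$ (i-m,j-m)))"
      using that by (intro ext) (rule Gidx)
    have cc: "continuous_on {0..1} (\<lambda>t. (if i < m then if j < m then (c t * c t) *\<^sub>R Z1 $$ (i,j) + (s t * s t) *\<^sub>R Z2 $$ (i,j)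
        else (c t * s t) *\<^sub>R Z1 $$ (i,j-m) + (-(s t * c t)) *\<^sub>R Z2 $$ (i,j-m)
      else if j < m then (s t * c t) *\<^sub>R Z1 $$ (i-m,j) + (-(c t * s t)) *\<^sub>R Z2 $$ (i-m,j)
        else (s t * s t) *\<^sub>R Z1 $$ (i-m,j-m) + (c t * c t) *\<^sub>R Z2 $$ (i-m,j-m)))"
      unfolding c_def s_def by (auto intro!: continuous_intros)
    show ?thesis by (subst eq) (rule cc)
  qed
  have G0: "G 0 = Z1 \<oplus>\<^sub>d Z2"
  proof (rule eq_matI)
    fix i j assume i: "i < dim_row (Z1 \<oplus>\<^sub>d Z2)" and j: "j < dim_col (Z1 \<oplus>\<^sub>d Z2)"
    then have i': "i < m + m" and j': "j < m + m" using d1 d2 by auto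
    have "i < m \<or> m \<le> i" by linarith
    moreover have "j < m \<or> m \<le> j" by linarith
    ultimately show "G 0 $$ (i,j) = (Z1 \<oplus>\<^sub>d Z2) $$ (i,j)"
      using i' j' by (elim disjE; simp add: Gidx c_def s_def dsum_idx d1 d2)
  qed (use Gdim[of 0] d1 d2 in auto)
  have G1: "G 1 = Z2 \<oplus>\<^sub>d Z1"
  proof (rule eq_matI)
    fix i j assume i: "i < dim_row (Z2 \<oplus>\<^sub>d Z1)" and j: "j < dim_col (Z2 \<oplus>\<^sub>d Z1)"
    then have i': "i < m + m" and j': "j < m + m" using d1 d2 by auto
    have "i < m \<or> m \<le> i" by linarith
    moreover have "j < m \<or> m \<le> j" by linarith
    ultimately show "G 1 $$ (i,j) = (Z2 \<oplus>\<^sub>d Z1) $$ (i,j)"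
      using i' j' by (elim disjE; simp add: Gidx c_def s_def dsum_idx d1 d2)
  qed (use Gdim[of 1] d1 d2 in auto)
  show ?thesis unfolding herm_homotopic_def
    by (intro exI[of _ G] conjI ballI allI impI hf cont G0 G1)
qed

lemma hh_cong: "herm_homotopic S k A B \<Longrightarrow> k = k' \<Longrightarrow> A = A' \<Longrightarrow> B = B' \<Longrightarrow> herm_homotopic S k' A' B'"
  by simp

lemma hf_cong: "hermitian_form S k A \<Longrightarrow> k = k' \<Longrightarrow> hermitian_form S k' A"
  by simp

lemma hfm: "X \<in> herm_forms S \<Longrightarrow> hermitian_form S (dim_row X) X"
  unfolding herm_forms_def using hf_carrier by fastforce

lemma hfm_ge1: "X \<in> herm_forms S \<Longrightarrow> 1 \<le> dim_row X"
  unfolding herm_forms_def using hf_carrier by fastforce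

lemma herm_formsI: "hermitian_form S n X \<Longrightarrow> 1 \<le> n \<Longrightarrow> X \<in> herm_forms S"
  unfolding herm_forms_def by auto

lemma pad_hf:
  assumes os: "operator_system S" and X: "X \<in> herm_forms S" and k: "dim_row X \<le> k"
  shows "hermitian_form S k (X \<oplus>\<^sub>d 1\<^sub>m (k - dim_row X))"
  using hf_dsum[OF os hfm[OF X] hf_one[OF os, of "k - dim_row X"]] k by simp

lemma herm_forms_dsum:
  assumes os: "operator_system S" and X: "X \<in> herm_forms S" and Y: "Y \<in> herm_forms S"
  shows "X \<oplus>\<^sub>d Y \<in> herm_forms S"
  using hf_dsum[OF os hfm[OF X] hfm[OF Y]] hfm_ge1[OF X] by (intro herm_formsI[of _ "dim_row X + dim_row Y"]) auto

lemma herm_forms_one: "operator_system S \<Longrightarrow> 1\<^sub>m 1 \<in> herm_forms S"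
  by (intro herm_formsI[of _ 1] hf_one) auto

lemma sr_iff: "(X, X') \<in> stable_rel S \<longleftrightarrow> X \<in> herm_forms S \<and> X' \<in> herm_forms S \<and>
     (\<exists>k. k \<ge> dim_row X \<and> k \<ge> dim_row X' \<and>
        herm_homotopic S k (X \<oplus>\<^sub>d 1\<^sub>m (k - dim_row X)) (X' \<oplus>\<^sub>d 1\<^sub>m (k - dim_row X')))"
  unfolding stable_rel_def by simp

lemma hh_lift:
  assumes os: "operator_system S"
    and h: "herm_homotopic S k (A \<oplus>\<^sub>d 1\<^sub>m (k - a)) (B \<oplus>\<^sub>d 1\<^sub>m (k - b))"
    and A: "hermitian_form S k (A \<oplus>\<^sub>d 1\<^sub>m (k - a))"
    and "a \<le> k" "b \<le> k" "k \<le> k'"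
  shows "herm_homotopic S k' (A \<oplus>\<^sub>d 1\<^sub>m (k' - a)) (B \<oplus>\<^sub>d 1\<^sub>m (k' - b))"
proof -
  have "herm_homotopic S (k + (k' - k)) ((A \<oplus>\<^sub>d 1\<^sub>m (k - a)) \<oplus>\<^sub>d 1\<^sub>m (k' - k))
      ((B \<oplus>\<^sub>d 1\<^sub>m (k - b)) \<oplus>\<^sub>d 1\<^sub>m (k' - k))"
    by (rule hh_dsum[OF os h hh_refl[OF hf_one[OF os]]])
  then show ?thesis
    by (rule hh_cong) (use assms in \<open>simp_all add: dsum_assoc one_dsum_one\<close>)
qed

lemma sr_lift:
  fixes S :: "'a::cstar_algebra set"
  assumes os: "operator_system S" and r: "(X, X') \<in> stable_rel S"
  shows "\<exists>k\<ge>K. k \<ge> dim_row X \<and> k \<ge> dim_row X' \<and>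
        herm_homotopic S k (X \<oplus>\<^sub>d 1\<^sub>m (k - dim_row X)) (X' \<oplus>\<^sub>d 1\<^sub>m (k - dim_row X'))"
proof -
  obtain k where k: "k \<ge> dim_row X" "k \<ge> dim_row X'"
    and h: "herm_homotopic S k (X \<oplus>\<^sub>d 1\<^sub>m (k - dim_row X)) (X' \<oplus>\<^sub>d 1\<^sub>m (k - dim_row X'))"
    and X: "X \<in> herm_forms S"
    using r unfolding sr_iff by blast
  have "herm_homotopic S (max k K) (X \<oplus>\<^sub>d 1\<^sub>m (max k K - dim_row X)) (X' \<oplus>\<^sub>d 1\<^sub>m (max k K - dim_row X'))"
    by (rule hh_lift[OF os h pad_hf[OF os X k(1)] k]) simp
  then show ?thesis using k by (intro exI[of _ "max k K"]) auto
qed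

lemma sr_refl:
  assumes os: "operator_system S" and X: "X \<in> herm_forms S"
  shows "(X, X) \<in> stable_rel S"
  unfolding sr_iff using X hh_refl[OF pad_hf[OF os X order_refl]] by blast

lemma sr_sym: "(X, Y) \<in> stable_rel S \<Longrightarrow> (Y, X) \<in> stable_rel S"
  unfolding sr_iff using hh_sym by blast

lemma sr_trans:
  fixes S :: "'a::cstar_algebra set"
  assumes os: "operator_system S" and r1: "(X, Y) \<in> stable_rel S" and r2: "(Y, Z) \<in> stable_rel S"
  shows "(X, Z) \<in> stable_rel S"
proof -
  obtain k2 where k2: "k2 \<ge> dim_row Y" "k2 \<ge> dim_row Z"
    and h2: "herm_homotopic S k2 (Y \<oplus>\<^sub>d 1\<^sub>m (k2 - dim_row Y)) (Z \<oplus>\<^sub>d 1\<^sub>m (k2 - dim_row Z))"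
    using r2 unfolding sr_iff by blast
  obtain k where k: "k \<ge> k2" "k \<ge> dim_row X" "k \<ge> dim_row Y"
    and h1: "herm_homotopic S k (X \<oplus>\<^sub>d 1\<^sub>m (k - dim_row X)) (Y \<oplus>\<^sub>d 1\<^sub>m (k - dim_row Y))"
    using sr_lift[OF os r1, of k2] by blast
  have Y: "Y \<in> herm_forms S" and X: "X \<in> herm_forms S" and Z: "Z \<in> herm_forms S"
    using r1 r2 unfolding sr_iff by auto
  have h2': "herm_homotopic S k (Y \<oplus>\<^sub>d 1\<^sub>m (k - dim_row Y)) (Z \<oplus>\<^sub>d 1\<^sub>m (k - dim_row Z))"
    by (rule hh_lift[OF os h2 pad_hf[OF os Y k2(1)] k2 k(1)])
  show ?thesis unfolding sr_iff using X Z k k2 hh_trans[OF h1 h2'] by auto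
qed

lemma sr_equiv:
  fixes S :: "'a::cstar_algebra set"
  assumes os: "operator_system S"
  shows "equiv (herm_forms S) (stable_rel S)"
proof (rule equivI)
  show "refl_on (herm_forms S) (stable_rel S)"
    unfolding refl_on_def using sr_refl[OF os] sr_iff by blast
  show "sym (stable_rel S)" unfolding sym_def using sr_sym by blast
  show "trans (stable_rel S)" unfolding trans_def using sr_trans[OF os] by blast
  show "stable_rel S \<subseteq> herm_forms S \<times> herm_forms S" unfolding stable_rel_def by auto
qed

lemma hh_M:
  fixes S :: "'a::cstar_algebra set"
  assumes os: "operator_system S" and X: "hermitian_form S a X" and Y: "hermitian_form S b Y"
  shows "herm_homotopic S (a + b + p + (p + b + j)) ((X \<oplus>\<^sub>d Y) \<oplus>\<^sub>d 1\<^sub>m (p + (p + b + j)))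
           ((X \<oplus>\<^sub>d 1\<^sub>m p) \<oplus>\<^sub>d (Y \<oplus>\<^sub>d 1\<^sub>m (p + b + j)))"
proof -
  have Yp: "hermitian_form S (b + p) (Y \<oplus>\<^sub>d 1\<^sub>m p)" by (rule hf_dsum[OF os Y hf_one[OF os]])
  have s1: "herm_homotopic S (b + p + (b + p)) ((Y \<oplus>\<^sub>d 1\<^sub>m p) \<oplus>\<^sub>d 1\<^sub>m (b + p)) (1\<^sub>m (b + p) \<oplus>\<^sub>d (Y \<oplus>\<^sub>d 1\<^sub>m p))"
    by (rule hh_swap[OF os Yp hf_one[OF os]])
  have s2: "herm_homotopic S (b + b) (1\<^sub>m b \<oplus>\<^sub>d Y) (Y \<oplus>\<^sub>d 1\<^sub>m b)"
    by (rule hh_swap[OF os hf_one[OF os] Y])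
  have s3: "herm_homotopic S (p + (b + b) + p) ((1\<^sub>m p \<oplus>\<^sub>d (1\<^sub>m b \<oplus>\<^sub>d Y)) \<oplus>\<^sub>d 1\<^sub>m p)
     ((1\<^sub>m p \<oplus>\<^sub>d (Y \<oplus>\<^sub>d 1\<^sub>m b)) \<oplus>\<^sub>d 1\<^sub>m p)"
    by (rule hh_dsum[OF os hh_dsum[OF os hh_refl[OF hf_one[OF os]] s2] hh_refl[OF hf_one[OF os]]])
  have e1: "1\<^sub>m (b + p) \<oplus>\<^sub>d (Y \<oplus>\<^sub>d 1\<^sub>m p) = (1\<^sub>m p \<oplus>\<^sub>d (1\<^sub>m b \<oplus>\<^sub>d Y)) \<oplus>\<^sub>d 1\<^sub>m p"
  proof -
    have "1\<^sub>m (b + p) = (1\<^sub>m p \<oplus>\<^sub>d 1\<^sub>m b :: 'a mat)" by (simp add: one_dsum_one add.commute)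
    then show ?thesis by (simp add: dsum_assoc)
  qed
  have s3': "herm_homotopic S (b + p + (b + p)) ((1\<^sub>m p \<oplus>\<^sub>d (1\<^sub>m b \<oplus>\<^sub>d Y)) \<oplus>\<^sub>d 1\<^sub>m p)
     ((1\<^sub>m p \<oplus>\<^sub>d (Y \<oplus>\<^sub>d 1\<^sub>m b)) \<oplus>\<^sub>d 1\<^sub>m p)"
    by (rule hh_cong[OF s3]) simp_all
  have s4: "herm_homotopic S (b + p + (b + p)) ((Y \<oplus>\<^sub>d 1\<^sub>m p) \<oplus>\<^sub>d 1\<^sub>m (b + p))
     ((1\<^sub>m p \<oplus>\<^sub>d (Y \<oplus>\<^sub>d 1\<^sub>m b)) \<oplus>\<^sub>d 1\<^sub>m p)"
    by (rule hh_trans[OF s1[unfolded e1] s3'])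
  have s5: "herm_homotopic S (b + p + (b + p) + j) (((Y \<oplus>\<^sub>d 1\<^sub>m p) \<oplus>\<^sub>d 1\<^sub>m (b + p)) \<oplus>\<^sub>d 1\<^sub>m j)
     (((1\<^sub>m p \<oplus>\<^sub>d (Y \<oplus>\<^sub>d 1\<^sub>m b)) \<oplus>\<^sub>d 1\<^sub>m p) \<oplus>\<^sub>d 1\<^sub>m j)"
    by (rule hh_dsum[OF os s4 hh_refl[OF hf_one[OF os]]])
  have s6: "herm_homotopic S (a + (b + p + (b + p) + j)) (X \<oplus>\<^sub>d (((Y \<oplus>\<^sub>d 1\<^sub>m p) \<oplus>\<^sub>d 1\<^sub>m (b + p)) \<oplus>\<^sub>d 1\<^sub>m j))
     (X \<oplus>\<^sub>d (((1\<^sub>m p \<oplus>\<^sub>d (Y \<oplus>\<^sub>d 1\<^sub>m b)) \<oplus>\<^sub>d 1\<^sub>m p) \<oplus>\<^sub>d 1\<^sub>m j))"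
    by (rule hh_dsum[OF os hh_refl[OF X] s5])
  show ?thesis
    by (rule hh_cong[OF s6]) (simp_all add: dsum_assoc one_dsum_one ac_simps)
qed

lemma sr_compat:
  fixes S :: "'a::cstar_algebra set"
  assumes os: "operator_system S" and r1: "(X, X') \<in> stable_rel S" and r2: "(Y, Y') \<in> stable_rel S"
  shows "(X \<oplus>\<^sub>d Y, X' \<oplus>\<^sub>d Y') \<in> stable_rel S"
proof -
  have XH: "X \<in> herm_forms S" "X' \<in> herm_forms S" using r1 unfolding sr_iff by auto
  have YH: "Y \<in> herm_forms S" "Y' \<in> herm_forms S" using r2 unfolding sr_iff by auto
  define a where "a = dim_row X"
  define a' where "a' = dim_row X'"
  define b where "b = dim_row Y"
  define b' where "b' = dim_row Y'"
  have X: "hermitian_form S a X" and X': "hermitian_form S a' X'"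
    and Y: "hermitian_form S b Y" and Y': "hermitian_form S b' Y'"
    using hfm XH YH unfolding a_def a'_def b_def b'_def by auto
  obtain K where K: "K \<ge> a" "K \<ge> a'"
    and hK: "herm_homotopic S K (X \<oplus>\<^sub>d 1\<^sub>m (K - a)) (X' \<oplus>\<^sub>d 1\<^sub>m (K - a'))"
    using r1 unfolding sr_iff a_def a'_def by blast
  obtain L where L: "L \<ge> K + b + b + b' + b'" "L \<ge> b" "L \<ge> b'"
    and hL: "herm_homotopic S L (Y \<oplus>\<^sub>d 1\<^sub>m (L - b)) (Y' \<oplus>\<^sub>d 1\<^sub>m (L - b'))"
    using sr_lift[OF os r2, of "K + b + b + b' + b'"] unfolding b_def b'_def by blast
  have n1: "K - a + (L - b) = K + L - (a + b)"
    and n2: "(K - a) + b + (L - b - (K - a) - b) = L - b"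
    and n3: "a + b + (K - a) + (L - b) = K + L"
    using K L by arith+
  have n1': "K - a' + (L - b') = K + L - (a' + b')"
    and n2': "(K - a') + b' + (L - b' - (K - a') - b') = L - b'"
    and n3': "a' + b' + (K - a') + (L - b') = K + L"
    using K L by arith+
  have M1: "herm_homotopic S (K + L) ((X \<oplus>\<^sub>d Y) \<oplus>\<^sub>d 1\<^sub>m (K + L - (a + b)))
      ((X \<oplus>\<^sub>d 1\<^sub>m (K - a)) \<oplus>\<^sub>d (Y \<oplus>\<^sub>d 1\<^sub>m (L - b)))"
    using hh_M[OF os X Y, of "K - a" "L - b - (K - a) - b"] unfolding n2 n1 n3 .
  have M2: "herm_homotopic S (K + L) ((X' \<oplus>\<^sub>d Y') \<oplus>\<^sub>d 1\<^sub>m (K + L - (a' + b')))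
      ((X' \<oplus>\<^sub>d 1\<^sub>m (K - a')) \<oplus>\<^sub>d (Y' \<oplus>\<^sub>d 1\<^sub>m (L - b')))"
    using hh_M[OF os X' Y', of "K - a'" "L - b' - (K - a') - b'"] unfolding n2' n1' n3' .
  have P: "herm_homotopic S (K + L) ((X \<oplus>\<^sub>d 1\<^sub>m (K - a)) \<oplus>\<^sub>d (Y \<oplus>\<^sub>d 1\<^sub>m (L - b)))
      ((X' \<oplus>\<^sub>d 1\<^sub>m (K - a')) \<oplus>\<^sub>d (Y' \<oplus>\<^sub>d 1\<^sub>m (L - b')))"
    by (rule hh_dsum[OF os hK hL])
  have H: "herm_homotopic S (K + L) ((X \<oplus>\<^sub>d Y) \<oplus>\<^sub>d 1\<^sub>m (K + L - (a + b)))
     ((X' \<oplus>\<^sub>d Y') \<oplus>\<^sub>d 1\<^sub>m (K + L - (a' + b')))"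
    by (rule hh_trans[OF M1 hh_trans[OF P hh_sym[OF M2]]])
  show ?thesis unfolding sr_iff
    using herm_forms_dsum[OF os XH(1) YH(1)] herm_forms_dsum[OF os XH(2) YH(2)] H K L
    unfolding a_def a'_def b_def b'_def by (intro conjI exI[of _ "K + L"]) auto
qed

lemma sr_comm:
  fixes S :: "'a::cstar_algebra set"
  assumes os: "operator_system S" and XH: "X \<in> herm_forms S" and YH: "Y \<in> herm_forms S"
  shows "(X \<oplus>\<^sub>d Y, Y \<oplus>\<^sub>d X) \<in> stable_rel S"
proof -
  define a where "a = dim_row X"
  define b where "b = dim_row Y"
  have X: "hermitian_form S a X" and Y: "hermitian_form S b Y"
    using hfm XH YH unfolding a_def b_def by auto
  have M1: "herm_homotopic S (a + b + b + (b + b + (a + a + a))) ((X \<oplus>\<^sub>d Y) \<oplus>\<^sub>d 1\<^sub>m (b + (b + b + (a + a + a))))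
           ((X \<oplus>\<^sub>d 1\<^sub>m b) \<oplus>\<^sub>d (Y \<oplus>\<^sub>d 1\<^sub>m (b + b + (a + a + a))))"
    by (rule hh_M[OF os X Y])
  have M2: "herm_homotopic S (b + a + a + (a + a + (b + b + b))) ((Y \<oplus>\<^sub>d X) \<oplus>\<^sub>d 1\<^sub>m (a + (a + a + (b + b + b))))
           ((Y \<oplus>\<^sub>d 1\<^sub>m a) \<oplus>\<^sub>d (X \<oplus>\<^sub>d 1\<^sub>m (a + a + (b + b + b))))"
    by (rule hh_M[OF os Y X])
  have P: "hermitian_form S (a + b) (X \<oplus>\<^sub>d 1\<^sub>m b)" by (rule hf_dsum[OF os X hf_one[OF os]])
  have Q: "hermitian_form S (a + b) (Y \<oplus>\<^sub>d 1\<^sub>m a)"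
    by (rule hf_cong[OF hf_dsum[OF os Y hf_one[OF os]]]) simp
  have SW: "herm_homotopic S (a + b + (a + b) + (a + a + b + b))
     ((X \<oplus>\<^sub>d 1\<^sub>m b) \<oplus>\<^sub>d (Y \<oplus>\<^sub>d 1\<^sub>m a) \<oplus>\<^sub>d 1\<^sub>m (a + a + b + b))
     ((Y \<oplus>\<^sub>d 1\<^sub>m a) \<oplus>\<^sub>d (X \<oplus>\<^sub>d 1\<^sub>m b) \<oplus>\<^sub>d 1\<^sub>m (a + a + b + b))"
    by (rule hh_dsum[OF os hh_swap[OF os P Q] hh_refl[OF hf_one[OF os]]])
  define k where "k = a + b + b + (b + b + (a + a + a))"
  have M1': "herm_homotopic S k ((X \<oplus>\<^sub>d Y) \<oplus>\<^sub>d 1\<^sub>m (k - (a + b)))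
     ((X \<oplus>\<^sub>d 1\<^sub>m b) \<oplus>\<^sub>d (Y \<oplus>\<^sub>d 1\<^sub>m a) \<oplus>\<^sub>d 1\<^sub>m (a + a + b + b))"
    by (rule hh_cong[OF M1]) (simp_all add: k_def dsum_assoc one_dsum_one ac_simps)
  have SW': "herm_homotopic S k
     ((X \<oplus>\<^sub>d 1\<^sub>m b) \<oplus>\<^sub>d (Y \<oplus>\<^sub>d 1\<^sub>m a) \<oplus>\<^sub>d 1\<^sub>m (a + a + b + b))
     ((Y \<oplus>\<^sub>d 1\<^sub>m a) \<oplus>\<^sub>d (X \<oplus>\<^sub>d 1\<^sub>m b) \<oplus>\<^sub>d 1\<^sub>m (a + a + b + b))"
    by (rule hh_cong[OF SW]) (simp_all add: k_def)
  have M2': "herm_homotopic S k ((Y \<oplus>\<^sub>d X) \<oplus>\<^sub>d 1\<^sub>m (k - (b + a)))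
     ((Y \<oplus>\<^sub>d 1\<^sub>m a) \<oplus>\<^sub>d (X \<oplus>\<^sub>d 1\<^sub>m b) \<oplus>\<^sub>d 1\<^sub>m (a + a + b + b))"
    by (rule hh_cong[OF M2]) (simp_all add: k_def dsum_assoc one_dsum_one ac_simps)
  have H: "herm_homotopic S k ((X \<oplus>\<^sub>d Y) \<oplus>\<^sub>d 1\<^sub>m (k - (a + b))) ((Y \<oplus>\<^sub>d X) \<oplus>\<^sub>d 1\<^sub>m (k - (b + a)))"
    by (rule hh_trans[OF M1' hh_trans[OF SW' hh_sym[OF M2']]])
  show ?thesis unfolding sr_iff
    using herm_forms_dsum[OF os XH YH] herm_forms_dsum[OF os YH XH] H
    unfolding a_def b_def k_def by (intro conjI exI[of _ k]) (auto simp: k_def a_def b_def)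
qed

section \<open>The monoid V(S)\<close>

lemma V_carrier: "carrier (V_monoid S) = herm_forms S // stable_rel S"
  and V_mult_def: "x \<otimes>\<^bsub>V_monoid S\<^esub> y = V_class S ((SOME X. X \<in> x) \<oplus>\<^sub>d (SOME Y. Y \<in> y))"
  and V_one: "\<one>\<^bsub>V_monoid S\<^esub> = V_class S (1\<^sub>m 1)"
  unfolding V_monoid_def by simp_all

lemma Vc_in: "X \<in> herm_forms S \<Longrightarrow> V_class S X \<in> carrier (V_monoid S)"
  unfolding V_carrier V_class_def by (rule quotientI)

lemma V_cases: "c \<in> carrier (V_monoid S) \<Longrightarrow> \<exists>X\<in>herm_forms S. c = V_class S X"
  unfolding V_carrier V_class_def by (auto elim: quotientE)

lemma V_eq:
  fixes S :: "'a::cstar_algebra set"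
  assumes os: "operator_system S" and r: "(X, Y) \<in> stable_rel S"
  shows "V_class S X = V_class S Y"
  unfolding V_class_def by (rule equiv_class_eq[OF sr_equiv[OF os] r])

lemma V_some:
  fixes S :: "'a::cstar_algebra set"
  assumes os: "operator_system S" and X: "X \<in> herm_forms S"
  shows "(X, SOME Z. Z \<in> V_class S X) \<in> stable_rel S"
proof -
  have "X \<in> V_class S X" unfolding V_class_def using sr_refl[OF os X] by simp
  then have "(SOME Z. Z \<in> V_class S X) \<in> V_class S X" by (rule someI)
  then show ?thesis unfolding V_class_def by simp
qed

lemma V_mult:
  fixes S :: "'a::cstar_algebra set"
  assumes os: "operator_system S" and X: "X \<in> herm_forms S" and Y: "Y \<in> herm_forms S"
  shows "V_class S X \<otimes>\<^bsub>V_monoid S\<^esub> V_class S Y = V_class S (X \<oplus>\<^sub>d Y)"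
  unfolding V_mult_def
  by (rule V_eq[OF os sr_sym[OF sr_compat[OF os V_some[OF os X] V_some[OF os Y]]]])

lemma sr_one_right:
  fixes S :: "'a::cstar_algebra set"
  assumes os: "operator_system S" and X: "X \<in> herm_forms S"
  shows "(X \<oplus>\<^sub>d 1\<^sub>m 1, X) \<in> stable_rel S"
proof -
  have X1: "X \<oplus>\<^sub>d 1\<^sub>m 1 \<in> herm_forms S" by (rule herm_forms_dsum[OF os X herm_forms_one[OF os]])
  have h: "hermitian_form S (dim_row X + 1) (X \<oplus>\<^sub>d 1\<^sub>m 1)"
    by (rule hf_dsum[OF os hfm[OF X] hf_one[OF os]])
  have "herm_homotopic S (dim_row X + 1) ((X \<oplus>\<^sub>d 1\<^sub>m 1) \<oplus>\<^sub>d 1\<^sub>m (dim_row X + 1 - dim_row (X \<oplus>\<^sub>d 1\<^sub>m 1)))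
      (X \<oplus>\<^sub>d 1\<^sub>m (dim_row X + 1 - dim_row X))"
    using hh_refl[OF h] by (simp add: dsum_one_zero)
  then show ?thesis unfolding sr_iff using X1 X by (intro conjI exI[of _ "dim_row X + 1"]) auto
qed

lemma V_comm_monoid:
  fixes S :: "'a::cstar_algebra set"
  assumes os: "operator_system S"
  shows "comm_monoid (V_monoid S)"
proof (rule comm_monoidI)
  fix x y assume x: "x \<in> carrier (V_monoid S)" and y: "y \<in> carrier (V_monoid S)"
  obtain X where X: "X \<in> herm_forms S" "x = V_class S X" using V_cases[OF x] by blast
  obtain Y where Y: "Y \<in> herm_forms S" "y = V_class S Y" using V_cases[OF y] by blast
  show "x \<otimes>\<^bsub>V_monoid S\<^esub> y \<in> carrier (V_monoid S)"
    unfolding X Y V_mult[OF os X(1) Y(1)] by (rule Vc_in[OF herm_forms_dsum[OF os X(1) Y(1)]])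
  show "x \<otimes>\<^bsub>V_monoid S\<^esub> y = y \<otimes>\<^bsub>V_monoid S\<^esub> x"
    unfolding X Y V_mult[OF os X(1) Y(1)] V_mult[OF os Y(1) X(1)]
    by (rule V_eq[OF os sr_comm[OF os X(1) Y(1)]])
next
  show "\<one>\<^bsub>V_monoid S\<^esub> \<in> carrier (V_monoid S)" unfolding V_one by (rule Vc_in[OF herm_forms_one[OF os]])
next
  fix x y z assume x: "x \<in> carrier (V_monoid S)" and y: "y \<in> carrier (V_monoid S)" and z: "z \<in> carrier (V_monoid S)"
  obtain X where X: "X \<in> herm_forms S" "x = V_class S X" using V_cases[OF x] by blast
  obtain Y where Y: "Y \<in> herm_forms S" "y = V_class S Y" using V_cases[OF y] by blast
  obtain Z where Z: "Z \<in> herm_forms S" "z = V_class S Z" using V_cases[OF z] by blast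
  have XY: "X \<oplus>\<^sub>d Y \<in> herm_forms S" by (rule herm_forms_dsum[OF os X(1) Y(1)])
  have YZ: "Y \<oplus>\<^sub>d Z \<in> herm_forms S" by (rule herm_forms_dsum[OF os Y(1) Z(1)])
  show "x \<otimes>\<^bsub>V_monoid S\<^esub> y \<otimes>\<^bsub>V_monoid S\<^esub> z = x \<otimes>\<^bsub>V_monoid S\<^esub> (y \<otimes>\<^bsub>V_monoid S\<^esub> z)"
    unfolding X(2) Y(2) Z(2) V_mult[OF os X(1) Y(1)] V_mult[OF os Y(1) Z(1)]
      V_mult[OF os XY Z(1)] V_mult[OF os X(1) YZ] dsum_assoc ..
next
  fix x assume x: "x \<in> carrier (V_monoid S)"
  obtain X where X: "X \<in> herm_forms S" "x = V_class S X" using V_cases[OF x] by blast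
  have "\<one>\<^bsub>V_monoid S\<^esub> \<otimes>\<^bsub>V_monoid S\<^esub> x = V_class S (1\<^sub>m 1 \<oplus>\<^sub>d X)"
    unfolding V_one X(2) by (rule V_mult[OF os herm_forms_one[OF os] X(1)])
  also have "\<dots> = V_class S (X \<oplus>\<^sub>d 1\<^sub>m 1)"
    by (rule V_eq[OF os sr_comm[OF os herm_forms_one[OF os] X(1)]])
  also have "\<dots> = x" unfolding X(2) by (rule V_eq[OF os sr_one_right[OF os X(1)]])
  finally show "\<one>\<^bsub>V_monoid S\<^esub> \<otimes>\<^bsub>V_monoid S\<^esub> x = x" .
qed

section \<open>Grothendieck group\<close>

context comm_monoid
begin

lemma groth_rel_iff: "((a, b), (c, d)) \<in> groth_rel G \<longleftrightarrow> a \<in> carrier G \<and> b \<in> carrier G \<and> c \<in> carrier G \<and> d \<in> carrier G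
     \<and> (\<exists>k \<in> carrier G. a \<otimes> d \<otimes> k = c \<otimes> b \<otimes> k)"
  unfolding groth_rel_def by simp

lemma groth_equiv: "equiv (carrier G \<times> carrier G) (groth_rel G)"
proof (rule equivI)
  show "groth_rel G \<subseteq> (carrier G \<times> carrier G) \<times> (carrier G \<times> carrier G)"
    unfolding groth_rel_def by auto
  show "refl_on (carrier G \<times> carrier G) (groth_rel G)"
    unfolding refl_on_def groth_rel_def by auto
  show "sym (groth_rel G)" unfolding sym_def groth_rel_def by (auto dest: sym)
  show "trans (groth_rel G)" unfolding trans_def
  proof (intro allI impI)
    fix x y z assume xy: "(x, y) \<in> groth_rel G" and yz: "(y, z) \<in> groth_rel G"
    obtain a b where x: "x = (a, b)" by (cases x)
    obtain c d where y: "y = (c, d)" by (cases y)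
    obtain e f where z: "z = (e, f)" by (cases z)
    obtain k where k: "k \<in> carrier G" "a \<otimes> d \<otimes> k = c \<otimes> b \<otimes> k"
      and cr: "a \<in> carrier G" "b \<in> carrier G" "c \<in> carrier G" "d \<in> carrier G"
      using xy unfolding x y groth_rel_iff by blast
    obtain l where l: "l \<in> carrier G" "c \<otimes> f \<otimes> l = e \<otimes> d \<otimes> l"
      and cr2: "e \<in> carrier G" "f \<in> carrier G"
      using yz unfolding y z groth_rel_iff by blast
    have "a \<otimes> f \<otimes> (c \<otimes> d \<otimes> k \<otimes> l) = (a \<otimes> d \<otimes> k) \<otimes> (c \<otimes> f \<otimes> l)"
      using cr cr2 k(1) l(1) by (simp add: m_ac)
    also have "\<dots> = (c \<otimes> b \<otimes> k) \<otimes> (e \<otimes> d \<otimes> l)" by (simp only: k(2) l(2))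
    also have "\<dots> = e \<otimes> b \<otimes> (c \<otimes> d \<otimes> k \<otimes> l)"
      using cr cr2 k(1) l(1) by (simp add: m_ac)
    finally have "a \<otimes> f \<otimes> (c \<otimes> d \<otimes> k \<otimes> l) = e \<otimes> b \<otimes> (c \<otimes> d \<otimes> k \<otimes> l)" .
    then show "(x, z) \<in> groth_rel G" unfolding x z groth_rel_iff
      using cr cr2 k l by (intro conjI bexI[of _ "c \<otimes> d \<otimes> k \<otimes> l"]) auto
  qed
qed

lemma groth_class_in: "a \<in> carrier G \<Longrightarrow> b \<in> carrier G \<Longrightarrow> groth_class G a b \<in> carrier (groth_group G)"
  unfolding groth_class_def groth_group_def by (simp add: quotientI)

lemma groth_cases: "p \<in> carrier (groth_group G) \<Longrightarrow> \<exists>a b. a \<in> carrier G \<and> b \<in> carrier G \<and> p = groth_class G a b"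
  unfolding groth_class_def groth_group_def by (auto elim!: quotientE)

lemma groth_class_eq: "((a, b), (c, d)) \<in> groth_rel G \<Longrightarrow> groth_class G a b = groth_class G c d"
  unfolding groth_class_def by (rule equiv_class_eq[OF groth_equiv])

lemma groth_some:
  assumes "a \<in> carrier G" "b \<in> carrier G"
  shows "((a, b), (SOME x. x \<in> groth_class G a b)) \<in> groth_rel G"
proof -
  have "(a, b) \<in> groth_class G a b" unfolding groth_class_def
    using groth_equiv assms by (auto simp: equiv_def refl_on_def)
  then have "(SOME x. x \<in> groth_class G a b) \<in> groth_class G a b" by (rule someI)
  then show ?thesis unfolding groth_class_def by simp
qed

lemma groth_compat:
  assumes r1: "((a, b), (a', b')) \<in> groth_rel G" and r2: "((c, d), (c', d')) \<in> groth_rel G"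
  shows "((a \<otimes> c, b \<otimes> d), (a' \<otimes> c', b' \<otimes> d')) \<in> groth_rel G"
proof -
  obtain k where k: "k \<in> carrier G" "a \<otimes> b' \<otimes> k = a' \<otimes> b \<otimes> k"
    and cr: "a \<in> carrier G" "b \<in> carrier G" "a' \<in> carrier G" "b' \<in> carrier G"
    using r1 unfolding groth_rel_iff by blast
  obtain l where l: "l \<in> carrier G" "c \<otimes> d' \<otimes> l = c' \<otimes> d \<otimes> l"
    and cr2: "c \<in> carrier G" "d \<in> carrier G" "c' \<in> carrier G" "d' \<in> carrier G"
    using r2 unfolding groth_rel_iff by blast
  have "a \<otimes> c \<otimes> (b' \<otimes> d') \<otimes> (k \<otimes> l) = (a \<otimes> b' \<otimes> k) \<otimes> (c \<otimes> d' \<otimes> l)"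
    using cr cr2 k(1) l(1) by (simp add: m_ac)
  also have "\<dots> = (a' \<otimes> b \<otimes> k) \<otimes> (c' \<otimes> d \<otimes> l)" by (simp only: k(2) l(2))
  also have "\<dots> = a' \<otimes> c' \<otimes> (b \<otimes> d) \<otimes> (k \<otimes> l)"
    using cr cr2 k(1) l(1) by (simp add: m_ac)
  finally show ?thesis unfolding groth_rel_iff
    using cr cr2 k l by (intro conjI bexI[of _ "k \<otimes> l"]) auto
qed

lemma groth_mult:
  assumes "a \<in> carrier G" "b \<in> carrier G" "c \<in> carrier G" "d \<in> carrier G"
  shows "groth_class G a b \<otimes>\<^bsub>groth_group G\<^esub> groth_class G c d = groth_class G (a \<otimes> c) (b \<otimes> d)"
proof -
  obtain a' b' where ab: "(SOME x. x \<in> groth_class G a b) = (a', b')" by fastforce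
  obtain c' d' where cd: "(SOME x. x \<in> groth_class G c d) = (c', d')" by fastforce
  have r1: "((a, b), (a', b')) \<in> groth_rel G" using groth_some[OF assms(1,2)] ab by simp
  have r2: "((c, d), (c', d')) \<in> groth_rel G" using groth_some[OF assms(3,4)] cd by simp
  have "groth_class G a b \<otimes>\<^bsub>groth_group G\<^esub> groth_class G c d = groth_class G (a' \<otimes> c') (b' \<otimes> d')"
    unfolding groth_group_def by (simp add: ab cd)
  also have "\<dots> = groth_class G (a \<otimes> c) (b \<otimes> d)"
    by (rule groth_class_eq[symmetric]) (rule groth_compat[OF r1 r2])
  finally show ?thesis .
qed

end

lemma groth_hom_rel:
  assumes M: "comm_monoid M" and N: "comm_monoid N" and h: "h \<in> hom M N"
    and r: "((a, b), (c, d)) \<in> groth_rel M"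
  shows "((h a, h b), (h c, h d)) \<in> groth_rel N"
proof -
  interpret M: comm_monoid M by (rule M)
  interpret N: comm_monoid N by (rule N)
  obtain k where k: "k \<in> carrier M" "a \<otimes>\<^bsub>M\<^esub> d \<otimes>\<^bsub>M\<^esub> k = c \<otimes>\<^bsub>M\<^esub> b \<otimes>\<^bsub>M\<^esub> k"
    and cr: "a \<in> carrier M" "b \<in> carrier M" "c \<in> carrier M" "d \<in> carrier M"
    using r unfolding M.groth_rel_iff by blast
  have e1: "h (a \<otimes>\<^bsub>M\<^esub> d \<otimes>\<^bsub>M\<^esub> k) = h a \<otimes>\<^bsub>N\<^esub> h d \<otimes>\<^bsub>N\<^esub> h k"
    using cr k(1) by (simp add: hom_mult[OF h])
  have e2: "h (c \<otimes>\<^bsub>M\<^esub> b \<otimes>\<^bsub>M\<^esub> k) = h c \<otimes>\<^bsub>N\<^esub> h b \<otimes>\<^bsub>N\<^esub> h k"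
    using cr k(1) by (simp add: hom_mult[OF h])
  have "h a \<otimes>\<^bsub>N\<^esub> h d \<otimes>\<^bsub>N\<^esub> h k = h c \<otimes>\<^bsub>N\<^esub> h b \<otimes>\<^bsub>N\<^esub> h k"
    using e1 e2 k(2) by metis
  then show ?thesis unfolding N.groth_rel_iff
    using cr k hom_in_carrier[OF h] by (intro conjI bexI[of _ "h k"]) auto
qed

lemma groth_functor:
  assumes M: "comm_monoid M" and N: "comm_monoid N" and h: "h \<in> hom M N"
  shows "\<exists>H. H \<in> hom (groth_group M) (groth_group N) \<and>
     (\<forall>a \<in> carrier M. \<forall>b \<in> carrier M. H (groth_class M a b) = groth_class N (h a) (h b))"
proof -
  interpret M: comm_monoid M by (rule M)
  interpret N: comm_monoid N by (rule N)
  define H where "H p = (case SOME x. x \<in> p of (a, b) \<Rightarrow> groth_class N (h a) (h b))" for p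
  have Hc: "H (groth_class M a b) = groth_class N (h a) (h b)" if ab: "a \<in> carrier M" "b \<in> carrier M" for a b
  proof -
    obtain c d where cd: "(SOME x. x \<in> groth_class M a b) = (c, d)" by fastforce
    have r: "((a, b), (c, d)) \<in> groth_rel M" using M.groth_some[OF ab] cd by simp
    have "H (groth_class M a b) = groth_class N (h c) (h d)" unfolding H_def cd by simp
    also have "\<dots> = groth_class N (h a) (h b)"
      by (rule N.groth_class_eq[symmetric]) (rule groth_hom_rel[OF M N h r])
    finally show ?thesis .
  qed
  have "H \<in> hom (groth_group M) (groth_group N)"
  proof (rule homI)
    fix x assume "x \<in> carrier (groth_group M)"
    then obtain a b where ab: "a \<in> carrier M" "b \<in> carrier M" "x = groth_class M a b"
      using M.groth_cases by blast
    show "H x \<in> carrier (groth_group N)"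
      unfolding ab(3) Hc[OF ab(1,2)] using hom_in_carrier[OF h] ab by (intro N.groth_class_in) auto
  next
    fix x y assume "x \<in> carrier (groth_group M)" "y \<in> carrier (groth_group M)"
    then obtain a b c d where ab: "a \<in> carrier M" "b \<in> carrier M" "x = groth_class M a b"
      and cd: "c \<in> carrier M" "d \<in> carrier M" "y = groth_class M c d"
      using M.groth_cases by metis
    have "H (x \<otimes>\<^bsub>groth_group M\<^esub> y) = H (groth_class M (a \<otimes>\<^bsub>M\<^esub> c) (b \<otimes>\<^bsub>M\<^esub> d))"
      unfolding ab(3) cd(3) M.groth_mult[OF ab(1,2) cd(1,2)] ..
    also have "\<dots> = groth_class N (h (a \<otimes>\<^bsub>M\<^esub> c)) (h (b \<otimes>\<^bsub>M\<^esub> d))"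
      using ab cd by (intro Hc) auto
    also have "\<dots> = groth_class N (h a \<otimes>\<^bsub>N\<^esub> h c) (h b \<otimes>\<^bsub>N\<^esub> h d)"
      using ab cd by (simp add: hom_mult[OF h])
    also have "\<dots> = groth_class N (h a) (h b) \<otimes>\<^bsub>groth_group N\<^esub> groth_class N (h c) (h d)"
      using ab cd hom_in_carrier[OF h] by (intro N.groth_mult[symmetric]) auto
    also have "\<dots> = H x \<otimes>\<^bsub>groth_group N\<^esub> H y"
      unfolding ab(3) cd(3) Hc[OF ab(1,2)] Hc[OF cd(1,2)] ..
    finally show "H (x \<otimes>\<^bsub>groth_group M\<^esub> y) = H x \<otimes>\<^bsub>groth_group N\<^esub> H y" .
  qed
  then show ?thesis using Hc by blast
qed

section \<open>Functoriality\<close>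

context
  fixes E :: "'a::cstar_algebra set" and F :: "'b::cstar_algebra set"
    and \<phi> :: "'a \<Rightarrow> 'b" and \<phi>t :: "'a \<Rightarrow> 'b"
  assumes osE: "operator_system E" and osF: "operator_system F"
    and ucp: "ucp_map E F \<phi>" and hom: "star_hom \<phi>t" and restr: "\<forall>x\<in>E. \<phi> x = \<phi>t x"
begin

lemma phi_in: "x \<in> E \<Longrightarrow> \<phi> x \<in> F"
  using ucp unfolding ucp_map_def by auto

lemma phi_one: "\<phi> 1 = 1"
  using ucp unfolding ucp_map_def by auto

lemma phit_one: "\<phi>t 1 = 1"
  using phi_one restr os_one[OF osE] by auto

lemma phi_zero: "\<phi> 0 = 0"
  using restr os_zero[OF osE] star_hom_zero[OF hom] by auto

lemma phit_sh: "semiring_hom \<phi>t"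
  by unfold_locales (simp_all add: star_hom_add[OF hom] star_hom_mult[OF hom] phit_one star_hom_zero[OF hom])

lemma phit_bl: "bounded_linear \<phi>t"
  by (rule star_hom_bounded_linear[OF hom phit_one])

lemma map_phi_eq: "mat_entries X \<subseteq> E \<Longrightarrow> map_mat \<phi> X = map_mat \<phi>t X"
  by (rule eq_matI) (auto simp: entries_iff restr)

lemma hf_map:
  assumes X: "hermitian_form E n X"
  shows "hermitian_form F n (map_mat \<phi> X)"
proof -
  have c: "X \<in> carrier_mat n n" and ent: "mat_entries X \<subseteq> E" and adjX: "mat_adj X = X"
    and inv: "invertible_mat X"
    using X unfolding hermitian_form_def by auto
  have eq: "map_mat \<phi> X = map_mat \<phi>t X" by (rule map_phi_eq[OF ent])
  have c': "map_mat \<phi> X \<in> carrier_mat n n" using c by simp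
  have ent': "mat_entries (map_mat \<phi> X) \<subseteq> F"
    unfolding entries_iff using c hf_entry[OF X] phi_in by auto
  have adj': "mat_adj (map_mat \<phi> X) = map_mat \<phi> X"
  proof (rule eq_matI)
    fix i j assume i: "i < dim_row (map_mat \<phi> X)" and j: "j < dim_col (map_mat \<phi> X)"
    then have i': "i < n" and j': "j < n" using c by auto
    have xij: "X $$ (i,j) = adj (X $$ (j,i))"
      using arg_cong[OF adjX, of "\<lambda>M. M $$ (i,j)"] i' j' c by simp
    have "mat_adj (map_mat \<phi> X) $$ (i,j) = adj (\<phi>t (X $$ (j,i)))"
      using i' j' c eq by simp
    also have "\<dots> = \<phi>t (adj (X $$ (j,i)))" by (simp add: star_hom_adj[OF hom])
    also have "\<dots> = map_mat \<phi> X $$ (i,j)" using i' j' c eq xij by simp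
    finally show "mat_adj (map_mat \<phi> X) $$ (i, j) = map_mat \<phi> X $$ (i, j)" .
  qed (use c in auto)
  have inv': "invertible_mat (map_mat \<phi> X)"
  proof -
    obtain B where B: "B \<in> carrier_mat n n" "X * B = 1\<^sub>m n" "B * X = 1\<^sub>m n"
      using invertible_inv[OF inv c] by blast
    have 1: "map_mat \<phi>t X * map_mat \<phi>t B = 1\<^sub>m n"
      using semiring_hom.mat_hom_mult[OF phit_sh c B(1)] semiring_hom.mat_hom_one[OF phit_sh] B(2) by simp
    have 2: "map_mat \<phi>t B * map_mat \<phi>t X = 1\<^sub>m n"
      using semiring_hom.mat_hom_mult[OF phit_sh B(1) c] semiring_hom.mat_hom_one[OF phit_sh] B(3) by simp
    show ?thesis unfolding eq by (rule invertible_intro[OF _ _ 1 2]) (use c B in auto)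
  qed
  show ?thesis unfolding hermitian_form_def using c' ent' adj' inv' by auto
qed

lemma herm_forms_map: "X \<in> herm_forms E \<Longrightarrow> map_mat \<phi> X \<in> herm_forms F"
  using hf_map[OF hfm] hfm_ge1 by (intro herm_formsI[of _ "dim_row X"]) auto

lemma map_dsum: "map_mat \<phi> (X \<oplus>\<^sub>d Y) = map_mat \<phi> X \<oplus>\<^sub>d map_mat \<phi> Y"
proof (rule eq_matI)
  fix i j assume i: "i < dim_row (map_mat \<phi> X \<oplus>\<^sub>d map_mat \<phi> Y)" and j: "j < dim_col (map_mat \<phi> X \<oplus>\<^sub>d map_mat \<phi> Y)"
  have "i < dim_row X \<or> dim_row X \<le> i" by linarith
  moreover have "j < dim_col X \<or> dim_col X \<le> j" by linarith
  ultimately show "map_mat \<phi> (X \<oplus>\<^sub>d Y) $$ (i, j) = (map_mat \<phi> X \<oplus>\<^sub>d map_mat \<phi> Y) $$ (i, j)"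
    using i j by (elim disjE; simp add: dsum_idx phi_zero)
qed auto

lemma map_one: "map_mat \<phi> (1\<^sub>m n) = 1\<^sub>m n"
  by (rule eq_matI) (auto simp: phi_one phi_zero)

lemma hh_map:
  assumes h: "herm_homotopic E k A B"
  shows "herm_homotopic F k (map_mat \<phi> A) (map_mat \<phi> B)"
proof -
  obtain g :: "real \<Rightarrow> 'a mat" where g: "\<forall>t\<in>{0..1}. hermitian_form E k (g t)"
    "\<forall>i<k. \<forall>j<k. continuous_on {0..1} (\<lambda>t. g t $$ (i,j))" "g 0 = A" "g 1 = B"
    using h unfolding herm_homotopic_def by blast
  have 1: "\<forall>t\<in>{0..1}. hermitian_form F k (map_mat \<phi> (g t))" using g(1) hf_map by blast
  have 2: "\<forall>i<k. \<forall>j<k. continuous_on {0..1} (\<lambda>t. map_mat \<phi> (g t) $$ (i,j))"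
  proof (intro allI impI)
    fix i j assume ij: "i < k" "j < k"
    have c: "continuous_on {0..1} (\<lambda>t. \<phi>t (g t $$ (i,j)))"
      using bounded_linear.continuous_on[OF phit_bl] g(2) ij by blast
    show "continuous_on {0..1} (\<lambda>t. map_mat \<phi> (g t) $$ (i,j))"
    proof (rule continuous_on_cong[THEN iffD1, OF refl _ c])
      fix t :: real assume t: "t \<in> {0..1}"
      then have gt: "hermitian_form E k (g t)" using g(1) by blast
      have "g t \<in> carrier_mat k k" using hf_carrier[OF gt] .
      moreover have "g t $$ (i,j) \<in> E" using hf_entry[OF gt] ij by blast
      ultimately show "\<phi>t (g t $$ (i,j)) = map_mat \<phi> (g t) $$ (i,j)" using ij restr by simp
    qed
  qed
  show ?thesis unfolding herm_homotopic_def
    by (intro exI[of _ "\<lambda>t. map_mat \<phi> (g t)"]) (use 1 2 g(3,4) in auto)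
qed

lemma sr_map:
  assumes r: "(X, X') \<in> stable_rel E"
  shows "(map_mat \<phi> X, map_mat \<phi> X') \<in> stable_rel F"
proof -
  obtain k where k: "k \<ge> dim_row X" "k \<ge> dim_row X'"
    and h: "herm_homotopic E k (X \<oplus>\<^sub>d 1\<^sub>m (k - dim_row X)) (X' \<oplus>\<^sub>d 1\<^sub>m (k - dim_row X'))"
    and H: "X \<in> herm_forms E" "X' \<in> herm_forms E"
    using r unfolding sr_iff by blast
  have "herm_homotopic F k (map_mat \<phi> X \<oplus>\<^sub>d 1\<^sub>m (k - dim_row X)) (map_mat \<phi> X' \<oplus>\<^sub>d 1\<^sub>m (k - dim_row X'))"
    using hh_map[OF h] by (simp add: map_dsum map_one)
  then show ?thesis unfolding sr_iff using k herm_forms_map[OF H(1)] herm_forms_map[OF H(2)]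
    by (intro conjI exI[of _ k]) auto
qed

lemma psi_class:
  assumes X: "X \<in> herm_forms E"
  shows "V_class F (map_mat \<phi> (SOME Z. Z \<in> V_class E X)) = V_class F (map_mat \<phi> X)"
  by (rule V_eq[OF osF sr_sym[OF sr_map[OF V_some[OF osE X]]]])

lemma psi_hom: "(\<lambda>c. V_class F (map_mat \<phi> (SOME Z. Z \<in> c))) \<in> hom (V_monoid E) (V_monoid F)"
proof (rule homI)
  fix x assume "x \<in> carrier (V_monoid E)"
  then obtain X where X: "X \<in> herm_forms E" "x = V_class E X" using V_cases by blast
  show "V_class F (map_mat \<phi> (SOME Z. Z \<in> x)) \<in> carrier (V_monoid F)"
    unfolding X(2) psi_class[OF X(1)] by (rule Vc_in[OF herm_forms_map[OF X(1)]])
next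
  fix x y assume "x \<in> carrier (V_monoid E)" "y \<in> carrier (V_monoid E)"
  then obtain X Y where X: "X \<in> herm_forms E" "x = V_class E X" and Y: "Y \<in> herm_forms E" "y = V_class E Y"
    using V_cases by metis
  have XY: "X \<oplus>\<^sub>d Y \<in> herm_forms E" by (rule herm_forms_dsum[OF osE X(1) Y(1)])
  show "V_class F (map_mat \<phi> (SOME Z. Z \<in> x \<otimes>\<^bsub>V_monoid E\<^esub> y)) =
      V_class F (map_mat \<phi> (SOME Z. Z \<in> x)) \<otimes>\<^bsub>V_monoid F\<^esub> V_class F (map_mat \<phi> (SOME Z. Z \<in> y))"
    unfolding X(2) Y(2) V_mult[OF osE X(1) Y(1)] psi_class[OF XY] psi_class[OF X(1)] psi_class[OF Y(1)]
      map_dsum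
    by (rule V_mult[OF osF herm_forms_map[OF X(1)] herm_forms_map[OF Y(1)], symmetric])
qed

end

theorem proposition3p19:
  fixes E :: "'a::cstar_algebra set" and F :: "'b::cstar_algebra set"
    and \<phi> :: "'a \<Rightarrow> 'b" and \<phi>t :: "'a \<Rightarrow> 'b"
  assumes envE: "is_cstar_envelope E"
    and envF: "is_cstar_envelope F"
    and ucp: "ucp_map E F \<phi>"
    and hom: "star_hom \<phi>t"
    and restr: "\<forall>x\<in>E. \<phi> x = \<phi>t x"
  shows "\<exists>\<psi> \<Psi>.
      (\<forall>X \<in> herm_forms E. map_mat \<phi> X \<in> herm_forms F
          \<and> \<psi> (V_class E X) = V_class F (map_mat \<phi> X))
    \<and> \<psi> \<in> hom (V_monoid E) (V_monoid F)
    \<and> \<Psi> \<in> hom (K0 E) (K0 F)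
    \<and> (\<forall>a \<in> carrier (V_monoid E). \<forall>b \<in> carrier (V_monoid E).
          \<Psi> (groth_class (V_monoid E) a b) = groth_class (V_monoid F) (\<psi> a) (\<psi> b))"
proof -
  have osE: "operator_system E" using envE unfolding is_cstar_envelope_def by auto
  have osF: "operator_system F" using envF unfolding is_cstar_envelope_def by auto
  define \<psi> where "\<psi> = (\<lambda>c. V_class F (map_mat \<phi> (SOME Z. Z \<in> c)))"
  have h: "\<psi> \<in> hom (V_monoid E) (V_monoid F)"
    unfolding \<psi>_def by (rule psi_hom[OF osE osF ucp hom restr])
  obtain \<Psi> where \<Psi>: "\<Psi> \<in> hom (K0 E) (K0 F)"
    "\<forall>a \<in> carrier (V_monoid E). \<forall>b \<in> carrier (V_monoid E).
          \<Psi> (groth_class (V_monoid E) a b) = groth_class (V_monoid F) (\<psi> a) (\<psi> b)"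
    using groth_functor[OF V_comm_monoid[OF osE] V_comm_monoid[OF osF] h] by blast
  have c: "\<forall>X \<in> herm_forms E. map_mat \<phi> X \<in> herm_forms F \<and> \<psi> (V_class E X) = V_class F (map_mat \<phi> X)"
    unfolding \<psi>_def using herm_forms_map[OF osE osF ucp hom restr] psi_class[OF osE osF ucp hom restr]
    by auto
  show ?thesis using c h \<Psi> by blast
qed

end
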